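(* For every $n\ge 2$, the Bigalke–Rollenske nilmanifold $X^{4n-2}$ does not admit any SKT metric.
   Context: Fix $n\ge2$. Let $G_n\subset GL(2n+2,\mathbb C)$ be the real nilpotent Lie group of upper triangular unipotent matrices parametrized by $x_1,\dots,x_{n-1},y_1,\dots,y_n,z_1,\dots,z_{n-1},w_1,\dots,w_n\in\mathbb C$ of the following shape (rows/columns indexed $1,\dots,2n+2$): row $1$ has entry $\bar y_1$ in column $2n+1$ and $w_1$ in column $2n+2$; for $k=2,\dots,n$, row $k$ has $\bar z_{k-1}$ in column $n+k-1$, $-x_{k-1}$ in column $n+k$ and $w_k$ in column $2n+2$; for $k=1,\dots,n$, row $n+k$ has $y_k$ in column $2n+2$; row $2n+1$ has $z_1$ in column $2n+2$; all other off-diagonal entries are $0$ and the diagonal entries are $1$. Let $\Gamma$ be the lattice of such matrices with entries in $\mathbb Z[i]$, and $X^{4n-2}=\Gamma\backslash G_n$, a compact complex manifold of complex dimension $4n-2$ with the left-invariant complex structure whose $(1,0)$-forms are spanned by the left-invariant co-frame $dx_j\,(1\le j\le n-1)$, $dy_j\,(1\le j\le n)$, $dz_j\,(1\le j\le n-1)$, $\omega_1=dw_1-\bar y_1dz_1$, $\omega_k=dw_k-\bar z_{k-1}dy_{k-1}+x_{k-1}dy_k$ $(k=2,\dots,n)$. These satisfy $d(dx_j)=d(dy_j)=d(dz_j)=0$, $\partial\omega_1=0$, $\bar\partial\omega_1=dz_1\wedge d\bar y_1$, and for $j=2,\dots,n$: $\partial\omega_j=dx_{j-1}\wedge dy_j$,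 $\bar\partial\omega_j=dy_{j-1}\wedge d\bar z_{j-1}$. An SKT (pluriclosed) metric is a Hermitian metric whose fundamental form $\omega$ satisfies $\partial\bar\partial\omega=0$. *)

theory Defs
  imports "HOL-Analysis.Analysis"
begin

text \<open>Complex dimension N = 4n-2.  Points of G_n are identified with their
coordinate vectors (x_1..x_{n-1}, y_1..y_n, z_1..z_{n-1}, w_1..w_n), stored
0-based at the positions below.\<close>

definition BR_N :: "nat \<Rightarrow> nat" where "BR_N n = 4 * n - 2"

definition cx :: "nat \<Rightarrow> nat \<Rightarrow> nat" where "cx n j = j - 1"
definition cy :: "nat \<Rightarrow> nat \<Rightarrow> nat" where "cy n j = n + j - 2"
definition cz :: "nat \<Rightarrow> nat \<Rightarrow> nat" where "cz n j = 2 * n + j - 2"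
definition cw :: "nat \<Rightarrow> nat \<Rightarrow> nat" where "cw n j = 3 * n + j - 3"

text \<open>The (2n+2)x(2n+2) matrix attached to a coordinate tuple p
(rows/columns indexed 1..2n+2).\<close>

definition BR_matrix :: "nat \<Rightarrow> (nat \<Rightarrow> complex) \<Rightarrow> nat \<Rightarrow> nat \<Rightarrow> complex" where
  "BR_matrix n p = (\<lambda>i j.
     if i = j \<and> 1 \<le> i \<and> i \<le> 2*n+2 then 1
     else if i = 1 \<and> j = 2*n+1 then cnj (p (cy n 1))
     else if i = 1 \<and> j = 2*n+2 then p (cw n 1)
     else if 2 \<le> i \<and> i \<le> n \<and> j = n+i-1 then cnj (p (cz n (i-1)))
     else if 2 \<le> i \<and> i \<le> n \<and> j = n+i then - p (cx n (i-1))
     else if 2 \<le> i \<and> i \<le> n \<and> j = 2*n+2 then p (cw n i)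
     else if n+1 \<le> i \<and> i \<le> 2*n \<and> j = 2*n+2 then p (cy n (i-n))
     else if i = 2*n+1 \<and> j = 2*n+2 then p (cz n 1)
     else 0)"

definition mat_mult :: "nat \<Rightarrow> (nat \<Rightarrow> nat \<Rightarrow> complex) \<Rightarrow> (nat \<Rightarrow> nat \<Rightarrow> complex)
    \<Rightarrow> nat \<Rightarrow> nat \<Rightarrow> complex" where
  "mat_mult n A B = (\<lambda>i j. \<Sum>k\<in>{1..2*n+2}. A i k * B k j)"

definition BR_coords :: "nat \<Rightarrow> (nat \<Rightarrow> nat \<Rightarrow> complex) \<Rightarrow> nat \<Rightarrow> complex" where
  "BR_coords n M = (\<lambda>c.
     if c < n - 1 then - M (c+2) (n+c+2)
     else if c < 2*n - 1 then M (n + (c+2-n)) (2*n+2)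
     else if c < 3*n - 2 then cnj (M (c+3-2*n) (n + (c+2-2*n)))
     else M (c+3-3*n) (2*n+2))"

text \<open>Points of G_n as vectors in complex^'N, via an enumeration
iota of the index type by {0..<N}.\<close>

definition vec_to_fun :: "(nat \<Rightarrow> 'N::finite) \<Rightarrow> complex^'N \<Rightarrow> nat \<Rightarrow> complex" where
  "vec_to_fun \<iota> v = (\<lambda>c. v $ \<iota> c)"

definition fun_to_vec :: "nat \<Rightarrow> (nat \<Rightarrow> 'N::finite) \<Rightarrow> (nat \<Rightarrow> complex) \<Rightarrow> complex^'N" where
  "fun_to_vec n \<iota> p = (\<chi> i. p (inv_into {..<BR_N n} \<iota> i))"

definition BR_mult :: "nat \<Rightarrow> (nat \<Rightarrow> 'N::finite) \<Rightarrow> complex^'N \<Rightarrow> complex^'N \<Rightarrow> complex^'N" where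
  "BR_mult n \<iota> u v = fun_to_vec n \<iota>
     (BR_coords n (mat_mult n (BR_matrix n (vec_to_fun \<iota> u)) (BR_matrix n (vec_to_fun \<iota> v))))"

definition gauss_ints :: "complex set" where
  "gauss_ints = {z. Re z \<in> \<int> \<and> Im z \<in> \<int>}"

definition BR_Gamma :: "nat \<Rightarrow> (nat \<Rightarrow> 'N::finite) \<Rightarrow> (complex^'N) set" where
  "BR_Gamma n \<iota> = {\<gamma>. \<forall>i j. BR_matrix n (vec_to_fun \<iota> \<gamma>) i j \<in> gauss_ints}"

fun C_k :: "nat \<Rightarrow> ('a::real_normed_vector \<Rightarrow> 'b::real_normed_vector) \<Rightarrow> bool" where
  "C_k 0 f = continuous_on UNIV f"
| "C_k (Suc k) f = ((\<forall>x. f differentiable (at x)) \<and>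
       (\<forall>v. C_k k (\<lambda>x. frechet_derivative f (at x) v)))"

definition smooth_map :: "('a::real_normed_vector \<Rightarrow> 'b::real_normed_vector) \<Rightarrow> bool" where
  "smooth_map f \<longleftrightarrow> (\<forall>k. C_k k f)"

definition wirt :: "(nat \<Rightarrow> 'N::finite) \<Rightarrow> nat \<Rightarrow> (complex^'N \<Rightarrow> complex) \<Rightarrow> complex^'N \<Rightarrow> complex" where
  "wirt \<iota> c f = (\<lambda>x. (frechet_derivative f (at x) (axis (\<iota> c) 1)
                     - \<i> * frechet_derivative f (at x) (axis (\<iota> c) \<i>)) / 2)"

definition wirtbar :: "(nat \<Rightarrow> 'N::finite) \<Rightarrow> nat \<Rightarrow> (complex^'N \<Rightarrow> complex) \<Rightarrow> complex^'N \<Rightarrow> complex" where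
  "wirtbar \<iota> c f = (\<lambda>x. (frechet_derivative f (at x) (axis (\<iota> c) 1)
                     + \<i> * frechet_derivative f (at x) (axis (\<iota> c) \<i>)) / 2)"

definition BR_jac :: "nat \<Rightarrow> (nat \<Rightarrow> 'N::finite) \<Rightarrow> complex^'N \<Rightarrow> complex^'N \<Rightarrow> nat \<Rightarrow> nat \<Rightarrow> complex" where
  "BR_jac n \<iota> \<gamma> x c e = deriv (\<lambda>t. BR_mult n \<iota> \<gamma> (x + axis (\<iota> e) t) $ \<iota> c) 0"

text \<open>A Hermitian metric on X, written on the universal cover G_n as
omega = i * sum g_cd dzeta_c /\ dconj(zeta_d): smooth, Hermitian, positive definite
coefficients, and omega invariant under pull-back by all left translations by Gamma.\<close>

definition BR_hermitian_metric ::
    "nat \<Rightarrow> (nat \<Rightarrow> 'N::finite) \<Rightarrow> (nat \<Rightarrow> nat \<Rightarrow> complex^'N \<Rightarrow> complex) \<Rightarrow> bool" where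
  "BR_hermitian_metric n \<iota> g \<longleftrightarrow>
     (\<forall>c<BR_N n. \<forall>d<BR_N n. smooth_map (g c d)) \<and>
     (\<forall>x c d. c < BR_N n \<longrightarrow> d < BR_N n \<longrightarrow> g d c x = cnj (g c d x)) \<and>
     (\<forall>x \<xi>. (\<exists>c<BR_N n. \<xi> c \<noteq> 0) \<longrightarrow>
        0 < Re (\<Sum>c<BR_N n. \<Sum>d<BR_N n. g c d x * \<xi> c * cnj (\<xi> d))) \<and>
     (\<forall>\<gamma>\<in>BR_Gamma n \<iota>. \<forall>x e f. e < BR_N n \<longrightarrow> f < BR_N n \<longrightarrow>
        g e f x = (\<Sum>c<BR_N n. \<Sum>d<BR_N n.
            BR_jac n \<iota> \<gamma> x c e * g c d (BR_mult n \<iota> \<gamma> x) * cnj (BR_jac n \<iota> \<gamma> x d f)))"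

text \<open>Pluriclosed condition: all coefficients of d d-bar omega vanish.\<close>

definition BR_pluriclosed ::
    "nat \<Rightarrow> (nat \<Rightarrow> 'N::finite) \<Rightarrow> (nat \<Rightarrow> nat \<Rightarrow> complex^'N \<Rightarrow> complex) \<Rightarrow> bool" where
  "BR_pluriclosed n \<iota> g \<longleftrightarrow>
     (\<forall>x c d e f. c < BR_N n \<longrightarrow> d < BR_N n \<longrightarrow> e < BR_N n \<longrightarrow> f < BR_N n \<longrightarrow>
        wirt \<iota> e (wirtbar \<iota> f (g c d)) x - wirt \<iota> c (wirtbar \<iota> f (g e d)) x
      - wirt \<iota> e (wirtbar \<iota> d (g c f)) x + wirt \<iota> c (wirtbar \<iota> d (g e f)) x = 0)"

definition BR_SKT_metric ::
    "nat \<Rightarrow> (nat \<Rightarrow> 'N::finite) \<Rightarrow> (nat \<Rightarrow> nat \<Rightarrow> complex^'N \<Rightarrow> complex) \<Rightarrow> bool" where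
  "BR_SKT_metric n \<iota> g \<longleftrightarrow> BR_hermitian_metric n \<iota> g \<and> BR_pluriclosed n \<iota> g"

end

theory Submission
  imports Defs
begin

locale BRS =
  fixes n :: nat and \<iota> :: "nat \<Rightarrow> 'N::finite"
  assumes n2: "2 \<le> n" and bij: "bij_betw \<iota> {..<BR_N n} (UNIV :: 'N set)"
begin

definition "i1 = \<iota> 0"
definition "i2 = \<iota> n"
definition "i3 = \<iota> (3*n-1)"

lemma N_eq: "BR_N n = 4*n-2" by (simp add: BR_N_def)

lemma inj_iota: "c < BR_N n \<Longrightarrow> d < BR_N n \<Longrightarrow> \<iota> c = \<iota> d \<longleftrightarrow> c = d"
  using bij by (auto simp: bij_betw_def inj_on_def)

lemma surj_iota: "\<exists>c<BR_N n. j = \<iota> c"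
proof -
  have "j \<in> \<iota> ` {..<BR_N n}" using bij unfolding bij_betw_def by simp
  then show ?thesis by auto
qed

lemma idx_lt: "0 < BR_N n" "n < BR_N n" "3*n-1 < BR_N n"
  using n2 by (auto simp: BR_N_def)

lemma i12: "i1 \<noteq> i2" using inj_iota[of 0 n] idx_lt n2 unfolding i1_def i2_def by simp
lemma i13: "i1 \<noteq> i3" using inj_iota[of 0 "3*n-1"] idx_lt n2 unfolding i1_def i3_def by simp
lemma i23: "i2 \<noteq> i3" using inj_iota[of n "3*n-1"] idx_lt n2 unfolding i2_def i3_def by simp
lemmas i_distinct = i12 i13 i23 i12[symmetric] i13[symmetric] i23[symmetric]

lemma iota_eq_i1: "c < BR_N n \<Longrightarrow> \<iota> c = i1 \<longleftrightarrow> c = 0"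
  using inj_iota[of c 0] idx_lt unfolding i1_def by simp
lemma iota_eq_i2: "c < BR_N n \<Longrightarrow> \<iota> c = i2 \<longleftrightarrow> c = n"
  using inj_iota[of c n] idx_lt unfolding i2_def by simp
lemma iota_eq_i3: "c < BR_N n \<Longrightarrow> \<iota> c = i3 \<longleftrightarrow> c = 3*n-1"
  using inj_iota[of c "3*n-1"] idx_lt unfolding i3_def by simp

definition gam :: "complex \<Rightarrow> complex \<Rightarrow> complex \<Rightarrow> complex^'N" where
  "gam a b c = axis i1 a + axis i2 b + axis i3 c"

lemma pG: "c < BR_N n \<Longrightarrow> vec_to_fun \<iota> (gam a b cc) c =
   (if c = 0 then a else if c = n then b else if c = 3*n-1 then cc else 0)"
  using n2 i_distinct by (simp add: vec_to_fun_def gam_def axis_def iota_eq_i1 iota_eq_i2 iota_eq_i3; presburger)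

lemma BRmat_gam: "BR_matrix n (vec_to_fun \<iota> (gam a b cc)) i k =
   (if i = k \<and> 1 \<le> i \<and> i \<le> 2*n+2 then 1 else 0) + (if i = 2 \<and> k = n+2 then -a else 0)
   + (if i = 2 \<and> k = 2*n+2 then cc else 0) + (if i = n+2 \<and> k = 2*n+2 then b else 0)"
proof -
  let ?p = "vec_to_fun \<iota> (gam a b cc)"
  have N: "BR_N n = 4*n-2" by (simp add: BR_N_def)
  have v1: "?p (cy n 1) = 0" "?p (cw n 1) = 0" "?p (cz n 1) = 0"
    using n2 by (simp add: pG N cy_def cw_def cz_def; presburger)+
  have v2: "?p (cz n (i-1)) = 0" "?p (cx n (i-1)) = (if i = 2 then a else 0)"
       "?p (cw n i) = (if i = 2 then cc else 0)" if "2 \<le> i" "i \<le> n" for i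
    using n2 that by (simp add: pG N cx_def cw_def cz_def; presburger)+
  have v3: "?p (cy n (i-n)) = (if i = n+2 then b else 0)" if "n+1 \<le> i" "i \<le> 2*n" for i
    using n2 that by (simp add: pG N cy_def; presburger)
  consider "i = 1" | "2 \<le> i \<and> i \<le> n" | "n+1 \<le> i \<and> i \<le> 2*n" | "i = 2*n+1" | "i = 2*n+2"
    | "i = 0 \<or> i > 2*n+2" by linarith
  then show ?thesis
  proof cases
    case 1 then show ?thesis using n2 v1 unfolding BR_matrix_def by simp
  next
    case 2 then show ?thesis using n2 v2[of i] unfolding BR_matrix_def by (cases "i = 2") simp_all
  next
    case 3 then show ?thesis using n2 v3[of i] unfolding BR_matrix_def by (cases "i = n+2") simp_all
  next
    case 4 then show ?thesis using n2 v1 unfolding BR_matrix_def by simp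
  next
    case 5 then show ?thesis using n2 unfolding BR_matrix_def by simp
  next
    case 6 then show ?thesis using n2 unfolding BR_matrix_def by (elim disjE; simp)
  qed
qed

lemma BRmat_out: "\<not> (1 \<le> i \<and> i \<le> 2*n+2) \<Longrightarrow> BR_matrix n p i j = 0"
  unfolding BR_matrix_def using n2 by (cases "i = 0") simp_all

lemma mm_gam: "mat_mult n (BR_matrix n (vec_to_fun \<iota> (gam a b cc))) B i j =
   (if 1 \<le> i \<and> i \<le> 2*n+2 then B i j else 0) + (if i = 2 then -a * B (n+2) j + cc * B (2*n+2) j else 0)
   + (if i = n+2 then b * B (2*n+2) j else 0)"
proof -
  have f: "finite {1..2*n+2}" by simp
  have "mat_mult n (BR_matrix n (vec_to_fun \<iota> (gam a b cc))) B i j =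
     (\<Sum>k\<in>{1..2*n+2}. (if k = i then B i j else 0)) + (\<Sum>k\<in>{1..2*n+2}. (if k = n+2 then (if i = 2 then -a * B (n+2) j else 0) else 0))
     + (\<Sum>k\<in>{1..2*n+2}. (if k = 2*n+2 then (if i = 2 then cc * B (2*n+2) j else 0) else 0))
     + (\<Sum>k\<in>{1..2*n+2}. (if k = 2*n+2 then (if i = n+2 then b * B (2*n+2) j else 0) else 0))"
    unfolding mat_mult_def BRmat_gam sum.distrib[symmetric]
    using n2 by (intro sum.cong) auto
  also have "\<dots> = (if 1 \<le> i \<and> i \<le> 2*n+2 then B i j else 0) + (if i = 2 then -a * B (n+2) j + cc * B (2*n+2) j else 0)
   + (if i = n+2 then b * B (2*n+2) j else 0)"
    using n2 by (simp add: sum.delta[OF f])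
  finally show ?thesis .
qed

lemma B_entries: "BR_matrix n p (n+2) (n+2) = 1" "BR_matrix n p (n+2) (n+1) = 0"
  "BR_matrix n p (n+2) (2*n+2) = p n"
  "BR_matrix n p (2*n+2) (n+2) = 0" "BR_matrix n p (2*n+2) (n+1) = 0" "BR_matrix n p (2*n+2) (2*n+2) = 1"
  unfolding BR_matrix_def using n2 by (simp_all add: cy_def)

lemma coords_mat: "c < BR_N n \<Longrightarrow> BR_coords n (BR_matrix n p) c = p c"
proof -
  assume c: "c < BR_N n"
  have N: "BR_N n = 4*n-2" by (simp add: BR_N_def)
  consider "c < n - 1" | "n - 1 \<le> c \<and> c < 2*n-1" | "2*n-1 \<le> c \<and> c < 3*n-2" | "3*n-2 \<le> c \<and> c < 4*n-2"
    using c N by linarith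
  then show ?thesis
  proof cases
    case 1
    have "BR_matrix n p (c+2) (n+c+2) = - p c"
    proof -
      have "c \<noteq> n" "c+2 \<le> n" "2 \<le> c+2" using 1 n2 by linarith+
      then show ?thesis unfolding BR_matrix_def by (simp add: cx_def)
    qed
    then show ?thesis using 1 unfolding BR_coords_def by simp
  next
    case 2
    have "BR_matrix n p (n + (c+2-n)) (2*n+2) = p c"
    proof -
      have "n + (c+2-n) = c+2" "\<not> c+2 \<le> n" "c+2 \<le> 2*n" "n+1 \<le> c+2" "c + 2 \<noteq> 2*n+2" "c+2 \<noteq> 1" "c+2 \<noteq> 2*n+1" using 2 n2 by linarith+
      then show ?thesis unfolding BR_matrix_def by (simp add: cy_def)
    qed
    then show ?thesis using 2 unfolding BR_coords_def by simp
  next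
    case 3
    have "BR_matrix n p (c+3-2*n) (n + (c+2-2*n)) = cnj (p c)"
    proof -
      have "c+3-2*n \<noteq> 1" "2 \<le> c+3-2*n" "c+3-2*n \<le> n" "n + (c+2-2*n) = n + (c+3-2*n) - 1"
        "c+3-2*n - 1 = c+2-2*n" "2*n + (c+2-2*n) - 2 = c" using 3 n2 by linarith+
      then show ?thesis unfolding BR_matrix_def by (simp add: cz_def)
    qed
    moreover have "\<not> c < n - 1" "\<not> c < 2*n-1" "c < 3*n-2" using 3 n2 by linarith+
    ultimately show ?thesis unfolding BR_coords_def by simp
  next
    case 4
    have "BR_matrix n p (c+3-3*n) (2*n+2) = p c"
    proof -
      have "1 \<le> c+3-3*n" "c+3-3*n \<le> n" "3*n + (c+3-3*n) - 3 = c" "c+3-3*n \<noteq> 2*n+2"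
        "2*n+2 \<noteq> n + (c+3-3*n) - 1" "2*n+2 \<noteq> n + (c+3-3*n)" using 4 n2 by linarith+
      then show ?thesis unfolding BR_matrix_def by (cases "c+3-3*n = 1") (simp_all add: cw_def)
    qed
    moreover have "\<not> c < n - 1" "\<not> c < 2*n-1" "\<not> c < 3*n-2" using 4 n2 by linarith+
    ultimately show ?thesis unfolding BR_coords_def by simp
  qed
qed

lemma coords_add: "BR_coords n (\<lambda>i j. M i j + D i j) c = BR_coords n M c + BR_coords n D c"
  unfolding BR_coords_def by simp

lemma coords_Delta:
  fixes p :: "nat \<Rightarrow> complex"
  assumes c: "c < BR_N n"
  defines "B \<equiv> BR_matrix n p"
  shows "BR_coords n (\<lambda>i j. (if i = 2 then -a * B (n+2) j + cc * B (2*n+2) j else 0)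
   + (if i = n+2 then b * B (2*n+2) j else 0)) c =
   (if c = 0 then a else if c = n then b else if c = 3*n-1 then cc - a * p n else 0)"
proof -
  have N: "BR_N n = 4*n-2" by (simp add: BR_N_def)
  have E: "B (n+2) (n+2) = 1" "B (n+2) (n+1) = 0" "B (n+2) (2*n+2) = p n"
    "B (2*n+2) (n+2) = 0" "B (2*n+2) (n+1) = 0" "B (2*n+2) (2*n+2) = 1"
    unfolding B_def by (rule B_entries)+
  consider "c < n - 1" | "n - 1 \<le> c \<and> c < 2*n-1" | "2*n-1 \<le> c \<and> c < 3*n-2" | "3*n-2 \<le> c \<and> c < 4*n-2"
    using c N by linarith
  then show ?thesis
  proof cases
    case 1
    have h: "c \<noteq> n" "c \<noteq> 3*n-1" "c+2 \<noteq> n+2" "n+c+2 \<noteq> 2*n+2" using 1 n2 by linarith+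
    show ?thesis
    proof (cases "c = 0")
      case True then show ?thesis using 1 h E unfolding BR_coords_def by simp
    next
      case False then have "c+2 \<noteq> 2" by simp
      then show ?thesis using 1 h False unfolding BR_coords_def by simp
    qed
  next
    case 2
    have h: "\<not> c < n - 1" "c < 2*n-1" "n + (c+2-n) = c+2" "c+2 \<noteq> 2" "c \<noteq> 0" "c \<noteq> 3*n-1" using 2 n2 by linarith+
    show ?thesis
    proof (cases "c = n")
      case True then show ?thesis using h E unfolding BR_coords_def by simp
    next
      case False then have "c+2 \<noteq> n+2" by simp
      then show ?thesis using h False unfolding BR_coords_def by simp
    qed
  next
    case 3
    have h: "\<not> c < n - 1" "\<not> c < 2*n-1" "c < 3*n-2" "c \<noteq> 0" "c \<noteq> n" "c \<noteq> 3*n-1"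
      "c+3-2*n \<noteq> n+2" using 3 n2 by linarith+
    show ?thesis
    proof (cases "c = 2*n-1")
      case True
      then have "c+3-2*n = 2" "n + (c+2-2*n) = n+1" using n2 by linarith+
      then show ?thesis using h E unfolding BR_coords_def by simp
    next
      case False then have "c+3-2*n \<noteq> 2" using 3 by linarith
      then show ?thesis using h unfolding BR_coords_def by simp
    qed
  next
    case 4
    have h: "\<not> c < n - 1" "\<not> c < 2*n-1" "\<not> c < 3*n-2" "c \<noteq> 0" "c \<noteq> n"
      "c+3-3*n \<noteq> n+2" using 4 n2 by linarith+
    show ?thesis
    proof (cases "c = 3*n-1")
      case True
      then have "c+3-3*n = 2" using n2 by linarith
      then show ?thesis using h E True unfolding BR_coords_def by simp
    next
      case False then have "c+3-3*n \<noteq> 2" using 4 by linarith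
      then show ?thesis using h False unfolding BR_coords_def by simp
    qed
  qed
qed

definition Lg :: "complex \<Rightarrow> complex \<Rightarrow> complex \<Rightarrow> complex^'N \<Rightarrow> complex^'N" where
  "Lg a b cc X = X + axis i1 a + axis i2 b + axis i3 (cc - a * X $ i2)"

lemma inv_iota: "c < BR_N n \<Longrightarrow> inv_into {..<BR_N n} \<iota> (\<iota> c) = c"
  using bij by (simp add: bij_betw_def inv_into_f_f)

lemma BRmult_gam: "BR_mult n \<iota> (gam a b cc) X = Lg a b cc X"
proof -
  let ?p = "vec_to_fun \<iota> X"
  let ?B = "BR_matrix n ?p"
  have nn: "3*n-1 \<noteq> n" "0 < n" "3*n - 1 \<noteq> 0" using n2 by linarith+
  have prod: "mat_mult n (BR_matrix n (vec_to_fun \<iota> (gam a b cc))) ?B = (\<lambda>i j. ?B i j +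
     ((if i = 2 then -a * ?B (n+2) j + cc * ?B (2*n+2) j else 0) + (if i = n+2 then b * ?B (2*n+2) j else 0)))"
  proof (intro ext)
    fix i j
    show "mat_mult n (BR_matrix n (vec_to_fun \<iota> (gam a b cc))) ?B i j = ?B i j +
     ((if i = 2 then -a * ?B (n+2) j + cc * ?B (2*n+2) j else 0) + (if i = n+2 then b * ?B (2*n+2) j else 0))"
      unfolding mm_gam using BRmat_out[of i ?p j] by (cases "1 \<le> i \<and> i \<le> 2*n+2") auto
  qed
  show ?thesis
  proof (subst vec_eq_iff, intro allI)
    fix j :: 'N
    obtain c where c: "c < BR_N n" "j = \<iota> c" using surj_iota by blast
    have "BR_mult n \<iota> (gam a b cc) X $ j = BR_coords n (mat_mult n (BR_matrix n (vec_to_fun \<iota> (gam a b cc))) ?B) c"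
      unfolding BR_mult_def fun_to_vec_def using c inv_iota by simp
    also have "\<dots> = ?p c + (if c = 0 then a else if c = n then b else if c = 3*n-1 then cc - a * ?p n else 0)"
      unfolding prod
      apply (subst coords_add[where M="?B"])
      apply (subst coords_mat[OF c(1)])
      apply (subst coords_Delta[OF c(1)])
      apply (rule refl)
      done
    also have "\<dots> = Lg a b cc X $ j"
      unfolding Lg_def using c i_distinct nn by (simp add: vec_to_fun_def axis_def iota_eq_i1 iota_eq_i2 iota_eq_i3 i2_def[symmetric])
    finally show "BR_mult n \<iota> (gam a b cc) X $ j = Lg a b cc X $ j" .
  qed
qed

lemma gi_add: "x \<in> gauss_ints \<Longrightarrow> y \<in> gauss_ints \<Longrightarrow> x + y \<in> gauss_ints"
  by (auto simp: gauss_ints_def)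
lemma gi_uminus: "x \<in> gauss_ints \<Longrightarrow> - x \<in> gauss_ints"
  by (auto simp: gauss_ints_def)
lemma gi_0: "0 \<in> gauss_ints" and gi_1: "1 \<in> gauss_ints" and gi_i: "\<i> \<in> gauss_ints"
  by (auto simp: gauss_ints_def)

lemma gam_Gamma: "a \<in> gauss_ints \<Longrightarrow> b \<in> gauss_ints \<Longrightarrow> cc \<in> gauss_ints \<Longrightarrow> gam a b cc \<in> BR_Gamma n \<iota>"
  unfolding BR_Gamma_def mem_Collect_eq BRmat_gam
  using n2 by (auto intro!: gi_add gi_uminus simp: gi_0 gi_1)

lemma BRjac_gam:
  assumes "c < BR_N n" "e < BR_N n"
  shows "BR_jac n \<iota> (gam a b cc) X c e = (if c = e then 1 else 0) - (if c = 3*n-1 \<and> e = n then a else 0)"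
proof -
  define \<beta> where "\<beta> = (if c = e then 1 else 0) - (if c = 3*n-1 \<and> e = n then a else (0::complex))"
  define K where "K = X $ \<iota> c + (if \<iota> c = i1 then a else 0) + (if \<iota> c = i2 then b else 0)
     + (if \<iota> c = i3 then cc - a * X $ i2 else 0)"
  have f: "(\<lambda>t. BR_mult n \<iota> (gam a b cc) (X + axis (\<iota> e) t) $ \<iota> c) = (\<lambda>t. K + \<beta> * t)"
  proof
    fix t
    show "BR_mult n \<iota> (gam a b cc) (X + axis (\<iota> e) t) $ \<iota> c = K + \<beta> * t"
      unfolding BRmult_gam Lg_def K_def \<beta>_def using assms inj_iota[OF assms] iota_eq_i2[OF assms(2)] iota_eq_i3[OF assms(1)]
      by (auto simp: axis_def algebra_simps)
  qed
  have "((\<lambda>t. K + \<beta> * t) has_field_derivative \<beta>) (at 0)"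
    by (auto intro!: derivative_eq_intros)
  then have "deriv (\<lambda>t. K + \<beta> * t) 0 = \<beta>" by (rule DERIV_imp_deriv)
  then show ?thesis unfolding BR_jac_def f \<beta>_def .
qed

end

lemma fd_at: "(F has_derivative F') (at X) \<Longrightarrow> frechet_derivative F (at X) = F'"
  using frechet_derivative_at by metis

lemma fdw: "F differentiable (at X) \<Longrightarrow> (F has_derivative frechet_derivative F (at X)) (at X)"
  by (simp add: frechet_derivative_works)

lemma diff_add[simp]: "F differentiable (at X) \<Longrightarrow> G differentiable (at X) \<Longrightarrow> (\<lambda>x. F x + G x) differentiable (at X)"
  by (rule differentiable_add)
lemma diff_diff[simp]: "F differentiable (at X) \<Longrightarrow> G differentiable (at X) \<Longrightarrow> (\<lambda>x. F x - G x) differentiable (at X)"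
  by (rule differentiable_diff)
lemma diff_mult[simp]:
  fixes F G :: "'a::real_normed_vector \<Rightarrow> 'b::real_normed_algebra"
  shows "F differentiable (at X) \<Longrightarrow> G differentiable (at X) \<Longrightarrow> (\<lambda>x. F x * G x) differentiable (at X)"
  unfolding differentiable_def using has_derivative_mult by blast
lemma diff_const[simp]: "(\<lambda>x. c) differentiable (at X)"
  by simp
lemma diff_nth[simp]: "(\<lambda>x::('a::real_normed_vector)^'n. x $ j) differentiable (at X)"
  by (rule bounded_linear_imp_differentiable) (rule bounded_linear_vec_nth)
lemma bl_cnj_nth: "bounded_linear (\<lambda>x::complex^'n. cnj (x $ j))"
  using bounded_linear_compose[OF bounded_linear_cnj bounded_linear_vec_nth[of j]] by (simp add: o_def)
lemma diff_cnj_nth[simp]: "(\<lambda>x::complex^'n. cnj (x $ j)) differentiable (at X)"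
  by (rule bounded_linear_imp_differentiable) (rule bl_cnj_nth)

lemma fd_add: "F differentiable (at X) \<Longrightarrow> G differentiable (at X) \<Longrightarrow>
   frechet_derivative (\<lambda>x. F x + G x) (at X) v = frechet_derivative F (at X) v + frechet_derivative G (at X) v"
  by (subst fd_at[OF has_derivative_add[OF fdw fdw]]) auto
lemma fd_diff: "F differentiable (at X) \<Longrightarrow> G differentiable (at X) \<Longrightarrow>
   frechet_derivative (\<lambda>x. F x - G x) (at X) v = frechet_derivative F (at X) v - frechet_derivative G (at X) v"
  by (subst fd_at[OF has_derivative_diff[OF fdw fdw]]) auto
lemma fd_mult:
  fixes F G :: "'a::real_normed_vector \<Rightarrow> 'b::real_normed_algebra"
  shows "F differentiable (at X) \<Longrightarrow> G differentiable (at X) \<Longrightarrow>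
   frechet_derivative (\<lambda>x. F x * G x) (at X) v = F X * frechet_derivative G (at X) v + frechet_derivative F (at X) v * G X"
  by (subst fd_at[OF has_derivative_mult[OF fdw fdw]]) auto
lemma fd_const: "frechet_derivative (\<lambda>x. c) (at X) v = 0"
  by (subst fd_at[OF has_derivative_const]) auto
lemma fd_nth: "frechet_derivative (\<lambda>x::('a::real_normed_vector)^'n. x $ j) (at X) v = v $ j"
  by (subst fd_at[OF bounded_linear_imp_has_derivative[OF bounded_linear_vec_nth]]) auto
lemma fd_cnj_nth: "frechet_derivative (\<lambda>x::complex^'n. cnj (x $ j)) (at X) v = cnj (v $ j)"
  by (subst fd_at[OF bounded_linear_imp_has_derivative[OF bl_cnj_nth]]) auto

lemma fd_linear: "F differentiable (at X) \<Longrightarrow> linear (frechet_derivative F (at X))"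
  using has_derivative_linear fdw by blast

definition C1 :: "('a::real_normed_vector \<Rightarrow> complex) \<Rightarrow> bool" where
  "C1 F \<longleftrightarrow> (\<forall>X. F differentiable (at X)) \<and> (\<forall>v. continuous_on UNIV (\<lambda>X. frechet_derivative F (at X) v))"

lemma C1_diffD: "C1 F \<Longrightarrow> F differentiable (at X)"
  by (simp add: C1_def)
lemma C1_contD: "C1 F \<Longrightarrow> continuous_on UNIV (\<lambda>X. frechet_derivative F (at X) v)"
  by (simp add: C1_def)
lemma C1_cont: "C1 F \<Longrightarrow> continuous_on UNIV F"
  by (meson C1_diffD continuous_at_imp_continuous_on differentiable_imp_continuous_within)

lemma C1_add: "C1 F \<Longrightarrow> C1 G \<Longrightarrow> C1 (\<lambda>x. F x + G x)"
  unfolding C1_def by (auto simp: fd_add intro!: continuous_intros)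
lemma C1_diff: "C1 F \<Longrightarrow> C1 G \<Longrightarrow> C1 (\<lambda>x. F x - G x)"
  unfolding C1_def by (auto simp: fd_diff intro!: continuous_intros)
lemma C1_mult: "C1 F \<Longrightarrow> C1 G \<Longrightarrow> C1 (\<lambda>x. F x * G x)"
proof -
  assume F: "C1 F" and G: "C1 G"
  have cF: "continuous_on UNIV F" and cG: "continuous_on UNIV G" using F G by (simp_all add: C1_cont)
  show ?thesis unfolding C1_def using F G cF cG
    by (auto simp: fd_mult C1_diffD intro!: continuous_intros C1_contD)
qed
lemma C1_const: "C1 (\<lambda>x. c)"
  unfolding C1_def by (simp add: fd_const)
lemma C1_nth: "C1 (\<lambda>x::complex^'n. x $ j)"
  unfolding C1_def by (simp add: fd_nth)
lemma C1_cnj_nth: "C1 (\<lambda>x::complex^'n. cnj (x $ j))"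
  unfolding C1_def by (simp add: fd_cnj_nth)

context BRS begin

lemma wirt_eq: "wirt \<iota> k F X = (frechet_derivative F (at X) (axis (\<iota> k) 1) - \<i> * frechet_derivative F (at X) (axis (\<iota> k) \<i>)) / 2"
  by (simp add: wirt_def)
lemma wirtbar_eq: "wirtbar \<iota> k F X = (frechet_derivative F (at X) (axis (\<iota> k) 1) + \<i> * frechet_derivative F (at X) (axis (\<iota> k) \<i>)) / 2"
  by (simp add: wirtbar_def)

lemma w_add: "F differentiable (at X) \<Longrightarrow> G differentiable (at X) \<Longrightarrow> wirt \<iota> k (\<lambda>x. F x + G x) X = wirt \<iota> k F X + wirt \<iota> k G X"
  unfolding wirt_eq by (simp add: fd_add field_simps)
lemma w_diff: "F differentiable (at X) \<Longrightarrow> G differentiable (at X) \<Longrightarrow> wirt \<iota> k (\<lambda>x. F x - G x) X = wirt \<iota> k F X - wirt \<iota> k G X"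
  unfolding wirt_eq by (simp add: fd_diff field_simps)
lemma w_mult: "F differentiable (at X) \<Longrightarrow> G differentiable (at X) \<Longrightarrow> wirt \<iota> k (\<lambda>x. F x * G x) X = F X * wirt \<iota> k G X + wirt \<iota> k F X * G X"
  unfolding wirt_eq by (simp add: fd_mult field_simps)
lemma w_const: "wirt \<iota> k (\<lambda>x. c) X = 0"
  unfolding wirt_eq by (simp add: fd_const)
lemma w_nth: "wirt \<iota> k (\<lambda>x. x $ j) X = (if \<iota> k = j then 1 else 0)"
  unfolding wirt_eq by (simp add: fd_nth axis_def)
lemma w_cnj_nth: "wirt \<iota> k (\<lambda>x. cnj (x $ j)) X = 0"
  unfolding wirt_eq by (simp add: fd_cnj_nth axis_def)
lemma wb_add: "F differentiable (at X) \<Longrightarrow> G differentiable (at X) \<Longrightarrow> wirtbar \<iota> k (\<lambda>x. F x + G x) X = wirtbar \<iota> k F X + wirtbar \<iota> k G X"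
  unfolding wirtbar_eq by (simp add: fd_add field_simps)
lemma wb_diff: "F differentiable (at X) \<Longrightarrow> G differentiable (at X) \<Longrightarrow> wirtbar \<iota> k (\<lambda>x. F x - G x) X = wirtbar \<iota> k F X - wirtbar \<iota> k G X"
  unfolding wirtbar_eq by (simp add: fd_diff field_simps)
lemma wb_mult: "F differentiable (at X) \<Longrightarrow> G differentiable (at X) \<Longrightarrow> wirtbar \<iota> k (\<lambda>x. F x * G x) X = F X * wirtbar \<iota> k G X + wirtbar \<iota> k F X * G X"
  unfolding wirtbar_eq by (simp add: fd_mult field_simps)
lemma wb_const: "wirtbar \<iota> k (\<lambda>x. c) X = 0"
  unfolding wirtbar_eq by (simp add: fd_const)
lemma wb_nth: "wirtbar \<iota> k (\<lambda>x. x $ j) X = 0"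
  unfolding wirtbar_eq by (simp add: fd_nth axis_def)
lemma wb_cnj_nth: "wirtbar \<iota> k (\<lambda>x. cnj (x $ j)) X = (if \<iota> k = j then 1 else 0)"
  unfolding wirtbar_eq by (simp add: fd_cnj_nth axis_def)

end

locale BRG = BRS n \<iota> for n :: nat and \<iota> :: "nat \<Rightarrow> 'N::finite" +
  fixes g :: "nat \<Rightarrow> nat \<Rightarrow> complex^'N \<Rightarrow> complex"
  assumes skt: "BR_SKT_metric n \<iota> g"
begin

lemma herm: "BR_hermitian_metric n \<iota> g" and plc: "BR_pluriclosed n \<iota> g"
  using skt by (simp_all add: BR_SKT_metric_def)

lemma smooth: "c < BR_N n \<Longrightarrow> d < BR_N n \<Longrightarrow> smooth_map (g c d)"
  using herm by (simp add: BR_hermitian_metric_def)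

lemma g_C2:
  assumes "c < BR_N n" "d < BR_N n"
  shows "g c d differentiable (at X)"
    and "(\<lambda>x. frechet_derivative (g c d) (at x) v) differentiable (at X)"
    and "continuous_on UNIV (\<lambda>x. frechet_derivative (\<lambda>x. frechet_derivative (g c d) (at x) v) (at x) w)"
proof -
  have "C_k (Suc (Suc 0)) (g c d)" using smooth[OF assms] by (simp add: smooth_map_def)
  then show "g c d differentiable (at X)"
    and "(\<lambda>x. frechet_derivative (g c d) (at x) v) differentiable (at X)"
    and "continuous_on UNIV (\<lambda>x. frechet_derivative (\<lambda>x. frechet_derivative (g c d) (at x) v) (at x) w)"
    by auto
qed

lemma C1_fdg: "c < BR_N n \<Longrightarrow> d < BR_N n \<Longrightarrow> C1 (\<lambda>x. frechet_derivative (g c d) (at x) v)"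
  unfolding C1_def using g_C2 by blast

lemma C1_g: "c < BR_N n \<Longrightarrow> d < BR_N n \<Longrightarrow> C1 (g c d)"
  unfolding C1_def using g_C2
  by (meson continuous_at_imp_continuous_on differentiable_imp_continuous_within)

lemma wb_form: "wirtbar \<iota> k F = (\<lambda>x. inverse 2 * (frechet_derivative F (at x) (axis (\<iota> k) 1) + \<i> * frechet_derivative F (at x) (axis (\<iota> k) \<i>)))"
  by (simp add: wirtbar_def field_simps)

lemma C1_wb: "c < BR_N n \<Longrightarrow> d < BR_N n \<Longrightarrow> C1 (wirtbar \<iota> k (g c d))"
  unfolding wb_form by (intro C1_mult C1_add C1_const C1_fdg)

lemma diff_g[simp]: "c < BR_N n \<Longrightarrow> d < BR_N n \<Longrightarrow> g c d differentiable (at X)"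
  using g_C2 by blast
lemma diff_wb[simp]: "c < BR_N n \<Longrightarrow> d < BR_N n \<Longrightarrow> wirtbar \<iota> k (g c d) differentiable (at X)"
  using C1_wb C1_diffD by blast

definition Tf :: "complex \<Rightarrow> (nat \<Rightarrow> nat \<Rightarrow> complex) \<Rightarrow> nat \<Rightarrow> nat \<Rightarrow> complex" where
  "Tf a G e f = G e f - (if f = n then cnj a * G e (3*n-1) else 0) - (if e = n then a * G (3*n-1) f else 0)
     + (if e = n \<and> f = n then a * cnj a * G (3*n-1) (3*n-1) else 0)"

lemma sumJ_left: "e < BR_N n \<Longrightarrow>
  (\<Sum>c<BR_N n. ((if c = e then 1 else 0) - (if c = 3*n-1 \<and> e = n then (a::complex) else 0)) * F c)
   = F e - (if e = n then a * F (3*n-1) else 0)"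
proof -
  assume e: "e < BR_N n"
  have "(\<Sum>c<BR_N n. ((if c = e then 1 else 0) - (if c = 3*n-1 \<and> e = n then a else 0)) * F c)
     = (\<Sum>c<BR_N n. (if c = e then F c else 0)) - (\<Sum>c<BR_N n. (if c = 3*n-1 then (if e = n then a * F c else 0) else 0))"
    apply (subst sum_subtractf[symmetric])
    apply (rule sum.cong)
     apply simp
    apply (auto simp: left_diff_distrib)
    done
  also have "\<dots> = F e - (if e = n then a * F (3*n-1) else 0)"
    using e idx_lt by (simp add: sum.delta)
  finally show ?thesis .
qed

lemma sumJ_right: "f < BR_N n \<Longrightarrow>
  (\<Sum>d<BR_N n. F d * cnj ((if d = f then 1 else 0) - (if d = 3*n-1 \<and> f = n then a else 0)))
   = F f - (if f = n then cnj a * F (3*n-1) else 0)"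
proof -
  assume f: "f < BR_N n"
  have "(\<Sum>d<BR_N n. F d * cnj ((if d = f then 1 else 0) - (if d = 3*n-1 \<and> f = n then a else 0)))
     = (\<Sum>d<BR_N n. (if d = f then F d else 0)) - (\<Sum>d<BR_N n. (if d = 3*n-1 then (if f = n then cnj a * F d else 0) else 0))"
    unfolding sum_subtractf[symmetric] by (intro sum.cong refl) (auto simp: right_diff_distrib)
  also have "\<dots> = F f - (if f = n then cnj a * F (3*n-1) else 0)"
    using f idx_lt by (simp add: sum.delta)
  finally show ?thesis .
qed

lemma ginv:
  assumes abc: "a \<in> gauss_ints" "b \<in> gauss_ints" "cc \<in> gauss_ints" and ef: "e < BR_N n" "f < BR_N n"
  shows "g e f X = Tf a (\<lambda>c d. g c d (Lg a b cc X)) e f"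
proof -
  have "g e f X = (\<Sum>c<BR_N n. \<Sum>d<BR_N n. BR_jac n \<iota> (gam a b cc) X c e * g c d (BR_mult n \<iota> (gam a b cc) X)
            * cnj (BR_jac n \<iota> (gam a b cc) X d f))"
    using herm gam_Gamma[OF abc] ef unfolding BR_hermitian_metric_def by blast
  also have "\<dots> = (\<Sum>c<BR_N n. ((if c = e then 1 else 0) - (if c = 3*n-1 \<and> e = n then a else 0)) *
      (\<Sum>d<BR_N n. g c d (Lg a b cc X) * cnj ((if d = f then 1 else 0) - (if d = 3*n-1 \<and> f = n then a else 0))))"
    using ef by (auto simp: BRjac_gam BRmult_gam sum_distrib_left mult.assoc intro!: sum.cong)
  also have "\<dots> = (\<Sum>c<BR_N n. ((if c = e then 1 else 0) - (if c = 3*n-1 \<and> e = n then a else 0)) *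
      (g c f (Lg a b cc X) - (if f = n then cnj a * g c (3*n-1) (Lg a b cc X) else 0)))"
    by (simp only: sumJ_right[OF ef(2)])
  also have "\<dots> = Tf a (\<lambda>c d. g c d (Lg a b cc X)) e f"
    using ef by (subst sumJ_left) (auto simp: Tf_def algebra_simps)
  finally show ?thesis .
qed

definition Lg' :: "complex \<Rightarrow> complex^'N \<Rightarrow> complex^'N" where
  "Lg' a v = v - axis i3 (a * v $ i2)"

lemma linear_Lg': "linear (Lg' a)"
  by (rule linearI) (simp_all add: Lg'_def vec_eq_iff axis_def algebra_simps; simp add: scaleR_conv_of_real algebra_simps)+

lemma Lg_hasd: "(Lg a b cc has_derivative Lg' a) (at X)"
proof -
  have e: "Lg a b cc = (\<lambda>X. Lg' a X + (axis i1 a + axis i2 b + axis i3 cc))"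
    by (rule ext) (simp add: Lg_def Lg'_def vec_eq_iff axis_def algebra_simps)
  have "bounded_linear (Lg' a)" using linear_Lg' linear_conv_bounded_linear by blast
  then show ?thesis unfolding e
    by (intro has_derivative_add_const bounded_linear_imp_has_derivative)
qed

lemma gL_hasd: "c < BR_N n \<Longrightarrow> d < BR_N n \<Longrightarrow>
  ((\<lambda>X. g c d (Lg a b cc X)) has_derivative (\<lambda>v. frechet_derivative (g c d) (at (Lg a b cc X)) (Lg' a v))) (at X)"
  using diff_chain_at[OF Lg_hasd fdw[OF diff_g]] by (simp add: o_def)

lemma fd_Tf:
  assumes "(G e f has_derivative G' e f) (at X)" "(G e (3*n-1) has_derivative G' e (3*n-1)) (at X)"
    "(G (3*n-1) f has_derivative G' (3*n-1) f) (at X)" "(G (3*n-1) (3*n-1) has_derivative G' (3*n-1) (3*n-1)) (at X)"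
  shows "frechet_derivative (\<lambda>x. Tf a (\<lambda>c d. G c d x) e f) (at X) v = Tf a (\<lambda>c d. G' c d v) e f"
proof -
  have "((\<lambda>x. Tf a (\<lambda>c d. G c d x) e f) has_derivative (\<lambda>v. Tf a (\<lambda>c d. G' c d v) e f)) (at X)"
    unfolding Tf_def using assms
    by (cases "e = n"; cases "f = n") (auto intro!: has_derivative_add has_derivative_diff has_derivative_mult_right)
  then show ?thesis by (simp add: fd_at)
qed

lemma fd_ginv:
  assumes abc: "a \<in> gauss_ints" "b \<in> gauss_ints" "cc \<in> gauss_ints" and ef: "e < BR_N n" "f < BR_N n"
  shows "frechet_derivative (g e f) (at X) v = Tf a (\<lambda>c d. frechet_derivative (g c d) (at (Lg a b cc X)) (Lg' a v)) e f"
proof -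
  have "g e f = (\<lambda>x. Tf a (\<lambda>c d. g c d (Lg a b cc x)) e f)"
    using ginv[OF abc ef] by blast
  then have "frechet_derivative (g e f) (at X) v = frechet_derivative (\<lambda>x. Tf a (\<lambda>c d. g c d (Lg a b cc x)) e f) (at X) v"
    by simp
  also have "\<dots> = Tf a (\<lambda>c d. frechet_derivative (g c d) (at (Lg a b cc X)) (Lg' a v)) e f"
    using ef idx_lt by (intro fd_Tf gL_hasd) auto
  finally show ?thesis .
qed

lemma Tf_lin: "Tf a (\<lambda>c d. (P c d + \<i> * Q c d) / 2) e f = (Tf a P e f + \<i> * Tf a Q e f) / 2"
  unfolding Tf_def by (simp add: field_simps)

lemma lin_axis:
  fixes L :: "complex^'n \<Rightarrow> complex"
  assumes "linear L"
  shows "L (axis j a) + \<i> * L (axis j (a * \<i>)) = cnj a * (L (axis j 1) + \<i> * L (axis j \<i>))"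
proof -
  have e1: "axis j a = Re a *\<^sub>R axis j 1 + Im a *\<^sub>R axis j \<i>"
    by (simp add: vec_eq_iff axis_def; simp add: complex_eq_iff)
  have e2: "axis j (a * \<i>) = (- Im a) *\<^sub>R axis j 1 + Re a *\<^sub>R axis j \<i>"
    by (simp add: vec_eq_iff axis_def; simp add: complex_eq_iff)
  show ?thesis unfolding e1 e2 linear_add[OF assms] linear_scale[OF assms]
    by (simp add: scaleR_conv_of_real complex_eq_iff algebra_simps)
qed

lemma wbinv:
  assumes abc: "a \<in> gauss_ints" "b \<in> gauss_ints" "cc \<in> gauss_ints" and ef: "e < BR_N n" "f < BR_N n"
    and k: "k < BR_N n"
  shows "wirtbar \<iota> k (g e f) X = Tf a (\<lambda>c d. wirtbar \<iota> k (g c d) (Lg a b cc X)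
     - (if k = n then cnj a * wirtbar \<iota> (3*n-1) (g c d) (Lg a b cc X) else 0)) e f"
proof -
  let ?Y = "Lg a b cc X"
  have "wirtbar \<iota> k (g e f) X = Tf a (\<lambda>c d. (frechet_derivative (g c d) (at ?Y) (Lg' a (axis (\<iota> k) 1))
     + \<i> * frechet_derivative (g c d) (at ?Y) (Lg' a (axis (\<iota> k) \<i>))) / 2) e f"
    unfolding wirtbar_eq Tf_lin fd_ginv[OF abc ef] ..
  also have "\<dots> = Tf a (\<lambda>c d. wirtbar \<iota> k (g c d) ?Y
     - (if k = n then cnj a * wirtbar \<iota> (3*n-1) (g c d) ?Y else 0)) e f"
  proof (cases "k = n")
    case False
    then have "\<iota> k \<noteq> i2" using iota_eq_i2 k by blast
    then have "Lg' a (axis (\<iota> k) z) = axis (\<iota> k) z" for z by (simp add: Lg'_def axis_def vec_eq_iff)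
    then show ?thesis using False by (simp add: wirtbar_eq)
  next
    case True
    have L: "Lg' a (axis i2 z) = axis i2 z - axis i3 (a * z)" for z using i_distinct by (simp add: Lg'_def axis_def)
    have h: "(frechet_derivative (g c d) (at ?Y) (Lg' a (axis (\<iota> n) 1)) + \<i> * frechet_derivative (g c d) (at ?Y) (Lg' a (axis (\<iota> n) \<i>))) / 2
      = wirtbar \<iota> n (g c d) ?Y - (if n = n then cnj a * wirtbar \<iota> (3*n-1) (g c d) ?Y else 0)" if "c < BR_N n" "d < BR_N n" for c d
    proof -
      have lin: "linear (frechet_derivative (g c d) (at ?Y))" using fd_linear diff_g that by blast
      show ?thesis unfolding if_True i2_def[symmetric] L wirtbar_eq linear_diff[OF lin] i3_def[symmetric]
        using lin_axis[OF lin, of i3 a] by (simp add: field_simps)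
    qed
    show ?thesis unfolding True Tf_def using ef idx_lt by (simp only: h)
  qed
  finally show ?thesis .
qed

abbreviation "k3 \<equiv> 3*n-1"

definition fA :: "complex^'N \<Rightarrow> complex" where
  "fA = (\<lambda>X. wirtbar \<iota> 0 (g n n) X - cnj (X$i1) * wirtbar \<iota> 0 (g n k3) X
     - X$i1 * wirtbar \<iota> 0 (g k3 n) X + X$i1 * cnj (X$i1) * wirtbar \<iota> 0 (g k3 k3) X
     - wirtbar \<iota> n (g n 0) X + X$i1 * wirtbar \<iota> n (g k3 0) X
     + cnj (X$i1) * wirtbar \<iota> k3 (g n 0) X - X$i1 * cnj (X$i1) * wirtbar \<iota> k3 (g k3 0) X)"
definition fB :: "complex^'N \<Rightarrow> complex" where
  "fB = (\<lambda>X. g k3 n X - cnj (X$i1) * g k3 k3 X)"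
definition fC2 :: "complex^'N \<Rightarrow> complex" where
  "fC2 = (\<lambda>X. - wirtbar \<iota> 0 (g 0 n) X + cnj (X$i1) * wirtbar \<iota> 0 (g 0 k3) X
     + wirtbar \<iota> n (g 0 0) X - cnj (X$i1) * wirtbar \<iota> k3 (g 0 0) X)"
definition fC3 :: "complex^'N \<Rightarrow> complex" where
  "fC3 = (\<lambda>X. X$i1 * wirtbar \<iota> 0 (g 0 n) X - X$i1 * cnj (X$i1) * wirtbar \<iota> 0 (g 0 k3) X
     - X$i1 * wirtbar \<iota> n (g 0 0) X + X$i1 * cnj (X$i1) * wirtbar \<iota> k3 (g 0 0) X)"
definition fD2 :: "complex^'N \<Rightarrow> complex" where
  "fD2 = (\<lambda>X. - g k3 0 X)"
definition fD3 :: "complex^'N \<Rightarrow> complex" where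
  "fD3 = (\<lambda>X. cnj (X$i1) * g k3 0 X)"

definition Qp :: "nat \<Rightarrow> nat \<Rightarrow> nat \<Rightarrow> nat \<Rightarrow> complex^'N \<Rightarrow> complex" where
  "Qp e c f d X = wirt \<iota> e (wirtbar \<iota> f (g c d)) X - wirt \<iota> c (wirtbar \<iota> f (g e d)) X
      - wirt \<iota> e (wirtbar \<iota> d (g c f)) X + wirt \<iota> c (wirtbar \<iota> d (g e f)) X"

lemma Qp_zero: "e < BR_N n \<Longrightarrow> c < BR_N n \<Longrightarrow> f < BR_N n \<Longrightarrow> d < BR_N n \<Longrightarrow> Qp e c f d X = 0"
  using plc unfolding BR_pluriclosed_def Qp_def by blast

lemma iotas: "\<iota> 0 = i1" "\<iota> n \<noteq> i1" "\<iota> k3 \<noteq> i1" "\<iota> (n*3 - Suc 0) \<noteq> i1"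
  using iota_eq_i1 idx_lt n2 by (auto simp: i1_def mult.commute)

lemma diff_uminus[simp]: "F differentiable (at X) \<Longrightarrow> (\<lambda>x. - F x) differentiable (at X)"
  by (rule differentiable_minus)
lemma w_uminus: "F differentiable (at X) \<Longrightarrow> wirt \<iota> k (\<lambda>x. - F x) X = - wirt \<iota> k F X"
  unfolding wirt_eq by (subst fd_at[OF has_derivative_minus[OF fdw]], assumption)+ (simp add: field_simps)
lemma wb_uminus: "F differentiable (at X) \<Longrightarrow> wirtbar \<iota> k (\<lambda>x. - F x) X = - wirtbar \<iota> k F X"
  unfolding wirtbar_eq by (subst fd_at[OF has_derivative_minus[OF fdw]], assumption)+ (simp add: field_simps)

lemma identity:
  "wirt \<iota> 0 fA X + wirtbar \<iota> 0 fB X + wirt \<iota> n fC2 X + wirt \<iota> k3 fC3 X + wirtbar \<iota> n fD2 X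
   + wirtbar \<iota> k3 fD3 X + g k3 k3 X =
   Qp 0 n 0 n X - cnj (X$i1) * Qp 0 n 0 k3 X - X$i1 * Qp 0 k3 0 n X + X$i1 * cnj (X$i1) * Qp 0 k3 0 k3 X"
  unfolding fA_def fB_def fC2_def fC3_def fD2_def fD3_def Qp_def
  using idx_lt
  apply (simp add: w_add w_diff w_mult w_const w_nth w_cnj_nth wb_add wb_diff wb_mult wb_const wb_nth wb_cnj_nth w_uminus wb_uminus iotas)
  apply (simp add: algebra_simps iotas)
  done

lemma flux_sum_zero:
  "wirt \<iota> 0 fA X + wirtbar \<iota> 0 fB X + wirt \<iota> n fC2 X + wirt \<iota> k3 fC3 X + wirtbar \<iota> n fD2 X
   + wirtbar \<iota> k3 fD3 X + g k3 k3 X = 0"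
  unfolding identity using idx_lt by (simp add: Qp_zero)

lemma Lg_i1: "(Lg a b cc X) $ i1 = X $ i1 + a"
  using i_distinct by (simp add: Lg_def axis_def)

lemma nn: "n \<noteq> 0" "k3 \<noteq> n" "k3 \<noteq> 0" "0 \<noteq> n" "n \<noteq> k3" "0 \<noteq> k3"
  "n*3 - Suc 0 \<noteq> n" "n*3 - Suc 0 \<noteq> 0" "n \<noteq> n*3 - Suc 0" "0 \<noteq> n*3 - Suc 0" using n2 by linarith+

lemma C1_uminus: "C1 F \<Longrightarrow> C1 (\<lambda>x. - F x)"
proof -
  assume F: "C1 F"
  have "C1 (\<lambda>x. (-1) * F x)" by (intro C1_mult C1_const F)
  then show ?thesis by simp
qed

lemma fA_inv:
  assumes abc: "a \<in> gauss_ints" "b \<in> gauss_ints" "cc \<in> gauss_ints"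
  shows "fA X = fA (Lg a b cc X)"
  unfolding fA_def
  using idx_lt
  apply (simp only: wbinv[OF abc, where X = X] Lg_i1)
  apply (simp add: Tf_def nn)
  apply (simp add: algebra_simps nn)
  done

lemma fB_inv:
  assumes abc: "a \<in> gauss_ints" "b \<in> gauss_ints" "cc \<in> gauss_ints"
  shows "fB X = fB (Lg a b cc X)"
  unfolding fB_def
  using idx_lt
  apply (simp only: ginv[OF abc, where X = X] Lg_i1)
  apply (simp add: Tf_def nn)
  apply (simp add: algebra_simps nn)
  done

lemma fC2_inv:
  assumes bc: "b \<in> gauss_ints" "cc \<in> gauss_ints"
  shows "fC2 X = fC2 (Lg 0 b cc X)"
  unfolding fC2_def
  using idx_lt gi_0
  apply (simp only: wbinv[OF gi_0 bc, where X = X] Lg_i1)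
  apply (simp add: Tf_def nn)
  done

lemma fC3_inv:
  assumes bc: "b \<in> gauss_ints" "cc \<in> gauss_ints"
  shows "fC3 X = fC3 (Lg 0 b cc X)"
  unfolding fC3_def
  using idx_lt gi_0
  apply (simp only: wbinv[OF gi_0 bc, where X = X] Lg_i1)
  apply (simp add: Tf_def nn)
  done

lemma fD2_inv:
  assumes bc: "b \<in> gauss_ints" "cc \<in> gauss_ints"
  shows "fD2 X = fD2 (Lg 0 b cc X)"
  unfolding fD2_def
  using idx_lt gi_0
  apply (simp only: ginv[OF gi_0 bc, where X = X] Lg_i1)
  apply (simp add: Tf_def nn)
  done

lemma fD3_inv:
  assumes bc: "b \<in> gauss_ints" "cc \<in> gauss_ints"
  shows "fD3 X = fD3 (Lg 0 b cc X)"
  unfolding fD3_def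
  using idx_lt gi_0
  apply (simp only: ginv[OF gi_0 bc, where X = X] Lg_i1)
  apply (simp add: Tf_def nn)
  done

lemma C1_fluxes: "C1 fA" "C1 fB" "C1 fC2" "C1 fC3" "C1 fD2" "C1 fD3"
  unfolding fA_def fB_def fC2_def fC3_def fD2_def fD3_def using idx_lt
  by (intro C1_add C1_diff C1_mult C1_uminus C1_wb C1_g C1_nth C1_cnj_nth C1_const; simp)+

end

lemma cont_comp: "continuous_on UNIV h \<Longrightarrow> continuous_on UNIV g \<Longrightarrow> continuous_on UNIV (\<lambda>x. h (g x))"
  by (rule continuous_on_compose2[of UNIV h UNIV g]) auto

lemma per_nat: "(\<And>x. f (x + 1) = f x) \<Longrightarrow> f (x + real m) = f (x::real)"
proof (induction m)
  case 0 then show ?case by simp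
next
  case (Suc m)
  have "f (x + real (Suc m)) = f ((x + real m) + 1)" by (simp add: algebra_simps)
  also have "\<dots> = f (x + real m)" using Suc by blast
  finally show ?case using Suc by simp
qed

lemma per_int: "(\<And>x. f (x + 1) = f x) \<Longrightarrow> f (x + real_of_int k) = f (x::real)"
proof (cases "k \<ge> 0")
  case True
  assume p: "\<And>x. f (x + 1) = f x"
  then show ?thesis using per_nat[of f x "nat k"] True by simp
next
  case False
  assume p: "\<And>x. f (x + 1) = f x"
  have "f (x + real_of_int k) = f ((x + real_of_int k) + real (nat (-k)))" using per_nat[of f, OF p] by simp
  also have "(x + real_of_int k) + real (nat (-k)) = x" using False by simp
  finally show ?thesis .
qed

lemma per1:
  fixes f :: "real \<Rightarrow> complex"
  assumes cont: "continuous_on UNIV f" and per: "\<And>x. f (x + 1) = f x"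
  shows "integral {0..1} (\<lambda>s. f (s + \<alpha>)) = integral {0..1} f"
proof -
  define m where "m = floor \<alpha>"
  define r where "r = \<alpha> - real_of_int m"
  have r: "0 \<le> r" "r \<le> 1" unfolding r_def m_def by linarith+
  have int: "f integrable_on {a..b}" for a b
    by (rule integrable_continuous_interval) (use cont continuous_on_subset in blast)
  have "integral {0..1} (\<lambda>s. f (s + \<alpha>)) = integral {0..1} (\<lambda>s. f (s + r))"
  proof (rule integral_cong)
    fix s show "f (s + \<alpha>) = f (s + r)" using per_int[of f "s + r" m, OF per] by (simp add: r_def)
  qed
  also have "\<dots> = integral {0..1} (f \<circ> (+) r)" by (simp add: o_def add.commute)
  also have "\<dots> = integral {r..1+r} f" using integral_shift_Icc_real[of 0 1 f r] by simp
  also have "\<dots> = integral {r..1} f + integral {1..1+r} f"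
    using Henstock_Kurzweil_Integration.integral_combine[where a=r and c=1 and b="1+r" and f=f] r int by simp
  also have "integral {1..1+r} f = integral {0..r} (f \<circ> (+) 1)" using integral_shift_Icc_real[of 0 r f 1] by (simp add: add.commute)
  also have "\<dots> = integral {0..r} f"
    by (rule integral_cong) (simp add: per add.commute)
  also have "integral {r..1} f + integral {0..r} f = integral {0..1} f"
    using Henstock_Kurzweil_Integration.integral_combine[where a=0 and c=r and b=1 and f=f] r int by (simp add: add.commute)
  finally show ?thesis .
qed

lemma inner_eq:
  fixes h h2 :: "'a::euclidean_space \<times> 'b::euclidean_space \<Rightarrow> complex"
  assumes "continuous_on UNIV h" "continuous_on UNIV h2"
    "\<And>u. u \<in> cbox a b \<Longrightarrow> integral (cbox c d) (\<lambda>r. h (u, r)) = integral (cbox c d) (\<lambda>r. h2 (u, r))"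
  shows "integral (cbox (a, c) (b, d)) h = integral (cbox (a, c) (b, d)) h2"
proof -
  have "integral (cbox (a, c) (b, d)) h = integral (cbox a b) (\<lambda>u. integral (cbox c d) (\<lambda>r. h (u, r)))"
    by (rule integral_prod_continuous) (use assms(1) continuous_on_subset in blast)
  also have "\<dots> = integral (cbox a b) (\<lambda>u. integral (cbox c d) (\<lambda>r. h2 (u, r)))"
    using assms(3) by (rule integral_cong)
  also have "\<dots> = integral (cbox (a, c) (b, d)) h2"
    by (rule integral_prod_continuous[symmetric]) (use assms(2) continuous_on_subset in blast)
  finally show ?thesis .
qed

lemma inner_zero:
  fixes h :: "'a::euclidean_space \<times> 'b::euclidean_space \<Rightarrow> complex"
  assumes "continuous_on UNIV h"
    "\<And>u. u \<in> cbox a b \<Longrightarrow> integral (cbox c d) (\<lambda>r. h (u, r)) = 0"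
  shows "integral (cbox (a, c) (b, d)) h = 0"
  using inner_eq[of h "\<lambda>_. 0" a b c d] assms by simp

lemma first_coord:
  fixes h h' :: "real \<times> 'b::euclidean_space \<Rightarrow> complex"
  assumes ch: "continuous_on UNIV h" and ch': "continuous_on UNIV h'"
    and der: "\<And>u r. ((\<lambda>u. h (u, r)) has_vector_derivative h' (u, r)) (at u)"
    and bd: "integral (cbox c d) (\<lambda>r. h (1, r)) = integral (cbox c d) (\<lambda>r. h (0, r))"
  shows "integral (cbox (0, c) (1, d)) h' = 0"
proof -
  have chc: "continuous_on (cbox (0, c) (1, d)) h'" using ch' continuous_on_subset by blast
  have "integral (cbox (0, c) (1, d)) h' = integral (cbox 0 1) (\<lambda>u. integral (cbox c d) (\<lambda>r. h' (u, r)))"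
    by (rule integral_prod_continuous[OF chc])
  also have "\<dots> = integral (cbox c d) (\<lambda>r. integral (cbox 0 1) (\<lambda>u. h' (u, r)))"
    by (rule integral_swap_continuous) (use chc in \<open>simp add: case_prod_beta'\<close>)
  also have "\<dots> = integral (cbox c d) (\<lambda>r. h (1, r) - h (0, r))"
  proof (rule integral_cong)
    fix r
    have "((\<lambda>u. h' (u, r)) has_integral (h (1, r) - h (0, r))) {0..1}"
      by (rule fundamental_theorem_of_calculus) (auto intro: has_vector_derivative_at_within der)
    then show "integral (cbox 0 1) (\<lambda>u. h' (u, r)) = h (1, r) - h (0, r)"
      by (simp add: integral_unique)
  qed
  also have "\<dots> = integral (cbox c d) (\<lambda>r. h (1, r)) - integral (cbox c d) (\<lambda>r. h (0, r))"
    by (rule integral_diff; rule integrable_continuous; rule cont_comp[OF ch, THEN continuous_on_subset];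
        auto intro!: continuous_intros)
  finally show ?thesis using bd by simp
qed

lemma shift2D:
  fixes q :: "real \<times> real \<Rightarrow> complex"
  assumes cq: "continuous_on UNIV q" and p1: "\<And>s t. q (s + 1, t) = q (s, t)" and p2: "\<And>s t. q (s, t + 1) = q (s, t)"
  shows "integral (cbox (0,0) (1,1)) (\<lambda>p. q (fst p + \<alpha>, snd p + \<beta>)) = integral (cbox (0,0) (1,1)) q"
proof -
  have c1: "continuous_on UNIV (\<lambda>p. q (fst p + \<alpha>, snd p + \<beta>))"
    by (rule cont_comp[OF cq]) (auto intro!: continuous_intros)
  have "integral (cbox (0,0) (1,1)) (\<lambda>p. q (fst p + \<alpha>, snd p + \<beta>)) =
      integral (cbox 0 1) (\<lambda>s. integral (cbox 0 1) (\<lambda>t. q (s + \<alpha>, t + \<beta>)))"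
    using integral_prod_continuous[of 0 0 1 1 "\<lambda>p. q (fst p + \<alpha>, snd p + \<beta>)"] continuous_on_subset[OF c1 subset_UNIV] by simp
  also have "\<dots> = integral (cbox 0 1) (\<lambda>s. integral (cbox 0 1) (\<lambda>t. q (s + \<alpha>, t)))"
  proof (rule integral_cong)
    fix s
    have cc: "continuous_on UNIV (\<lambda>t. q (s + \<alpha>, t))"
      by (rule cont_comp[OF cq]) (auto intro!: continuous_intros)
    show "integral (cbox 0 1) (\<lambda>t. q (s + \<alpha>, t + \<beta>)) = integral (cbox 0 1) (\<lambda>t. q (s + \<alpha>, t))"
      using per1[of "\<lambda>t. q (s + \<alpha>, t)" \<beta>, OF cc] p2 by simp
  qed
  also have "\<dots> = integral (cbox 0 1) (\<lambda>t. integral (cbox 0 1) (\<lambda>s. q (s + \<alpha>, t)))"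
  proof (rule integral_swap_continuous)
    have "continuous_on UNIV (\<lambda>x. q (fst x + \<alpha>, snd x))"
      by (rule cont_comp[OF cq]) (auto intro!: continuous_intros)
    then show "continuous_on (cbox (0, 0) (1, 1)) (\<lambda>(s, t). q (s + \<alpha>, t))"
      by (simp add: case_prod_beta') (meson continuous_on_subset subset_UNIV)
  qed
  also have "\<dots> = integral (cbox 0 1) (\<lambda>t. integral (cbox 0 1) (\<lambda>s. q (s, t)))"
  proof (rule integral_cong)
    fix t
    have cc: "continuous_on UNIV (\<lambda>s. q (s, t))"
      by (rule cont_comp[OF cq]) (auto intro!: continuous_intros)
    show "integral (cbox 0 1) (\<lambda>s. q (s + \<alpha>, t)) = integral (cbox 0 1) (\<lambda>s. q (s, t))"
      using per1[of "\<lambda>s. q (s, t)" \<alpha>, OF cc] p1 by simp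
  qed
  also have "\<dots> = integral (cbox 0 1) (\<lambda>s. integral (cbox 0 1) (\<lambda>t. q (s, t)))"
  proof (rule integral_swap_continuous[symmetric])
    show "continuous_on (cbox (0, 0) (1, 1)) (\<lambda>(s, t). q (s, t))"
      using continuous_on_subset[OF cq subset_UNIV] by simp
  qed
  also have "\<dots> = integral (cbox (0,0) (1,1)) q"
    using integral_prod_continuous[of 0 0 1 1 q] continuous_on_subset[OF cq subset_UNIV] by simp
  finally show ?thesis .
qed

type_synonym r4 = "real \<times> real \<times> real \<times> real"
type_synonym r5 = "real \<times> real \<times> real \<times> real \<times> real"
type_synonym r6 = "real \<times> real \<times> real \<times> real \<times> real \<times> real"

lemma shift4:
  fixes H :: "r4 \<Rightarrow> complex"
  assumes cH: "continuous_on UNIV H"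
    and p1: "\<And>s2 t2 s3 t3. H (s2, t2, s3 + 1, t3) = H (s2, t2, s3, t3)"
    and p2: "\<And>s2 t2 s3 t3. H (s2, t2, s3, t3 + 1) = H (s2, t2, s3, t3)"
  shows "integral (cbox (0,0,0,0) (1,1,1,1)) (\<lambda>x. H (fst x, fst (snd x),
      fst (snd (snd x)) + (a1 * fst x + a2 * fst (snd x)), snd (snd (snd x)) + (b1 * fst x + b2 * fst (snd x))))
    = integral (cbox (0,0,0,0) (1,1,1,1)) H"
proof (rule inner_eq)
  show "continuous_on UNIV (\<lambda>x. H (fst x, fst (snd x),
      fst (snd (snd x)) + (a1 * fst x + a2 * fst (snd x)), snd (snd (snd x)) + (b1 * fst x + b2 * fst (snd x))))"
    by (rule cont_comp[OF cH]) (auto intro!: continuous_intros)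
  show "continuous_on UNIV H" by (rule cH)
  fix s2 :: real
  show "integral (cbox (0,0,0) (1,1,1)) (\<lambda>r. H (fst (s2, r), fst (snd (s2, r)),
      fst (snd (snd (s2, r))) + (a1 * fst (s2, r) + a2 * fst (snd (s2, r))),
      snd (snd (snd (s2, r))) + (b1 * fst (s2, r) + b2 * fst (snd (s2, r))))) =
    integral (cbox (0,0,0) (1,1,1)) (\<lambda>r. H (s2, r))"
  proof (simp, rule inner_eq)
    show "continuous_on UNIV (\<lambda>x. H (s2, fst x, fst (snd x) + (a1 * s2 + a2 * fst x), snd (snd x) + (b1 * s2 + b2 * fst x)))"
      by (rule cont_comp[OF cH]) (auto intro!: continuous_intros)
    show "continuous_on UNIV (\<lambda>x. H (s2, x))"
      by (rule cont_comp[OF cH]) (auto intro!: continuous_intros)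
    fix t2 :: real
    have cq: "continuous_on UNIV (\<lambda>p. H (s2, t2, p))"
      by (rule cont_comp[OF cH]) (auto intro!: continuous_intros)
    show "integral (cbox (0, 0) (1, 1))
          (\<lambda>r. H (s2, fst (t2, r), fst (snd (t2, r)) + (a1 * s2 + a2 * fst (t2, r)),
                snd (snd (t2, r)) + (b1 * s2 + b2 * fst (t2, r)))) =
         integral (cbox (0, 0) (1, 1)) (\<lambda>r. H (s2, t2, r))"
      using shift2D[of "\<lambda>p. H (s2, t2, p)" "a1 * s2 + a2 * t2" "b1 * s2 + b2 * t2", OF cq] p1 p2 by simp
  qed
qed

lemma D_s1:
  fixes h h' :: "r6 \<Rightarrow> complex"
  assumes ch: "continuous_on UNIV h" and ch': "continuous_on UNIV h'"
    and der: "\<And>u r. ((\<lambda>u. h (u, r)) has_vector_derivative h' (u, r)) (at u)"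
    and bd: "\<And>t1 s2 t2 s3 t3. h (0, t1, s2, t2, s3, t3) = h (1, t1, s2, t2, s3 - s2, t3 - t2)"
    and p5: "\<And>s1 t1 s2 t2 s3 t3. h (s1, t1, s2, t2, s3 + 1, t3) = h (s1, t1, s2, t2, s3, t3)"
    and p6: "\<And>s1 t1 s2 t2 s3 t3. h (s1, t1, s2, t2, s3, t3 + 1) = h (s1, t1, s2, t2, s3, t3)"
  shows "integral (cbox (0,0,0,0,0,0) (1,1,1,1,1,1)) h' = 0"
proof (rule first_coord[OF ch ch' der])
  have "integral (cbox (0,0,0,0,0) (1,1,1,1,1)) (\<lambda>r. h (0, r)) =
    integral (cbox (0,0,0,0,0) (1,1,1,1,1)) (\<lambda>r. h (1, fst r, fst (snd r), fst (snd (snd r)),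
       fst (snd (snd (snd r))) + ((-1) * fst (snd r) + 0 * fst (snd (snd r))),
       snd (snd (snd (snd r))) + (0 * fst (snd r) + (-1) * fst (snd (snd r)))))"
    by (rule integral_cong) (auto simp: bd split: prod.splits)
  also have "\<dots> = integral (cbox (0,0,0,0,0) (1,1,1,1,1)) (\<lambda>r. h (1, r))"
  proof (rule inner_eq)
    show "continuous_on UNIV (\<lambda>r. h (1, fst r, fst (snd r), fst (snd (snd r)),
       fst (snd (snd (snd r))) + ((-1) * fst (snd r) + 0 * fst (snd (snd r))),
       snd (snd (snd (snd r))) + (0 * fst (snd r) + (-1) * fst (snd (snd r)))))"
      by (rule cont_comp[OF ch]) (auto intro!: continuous_intros)
    show "continuous_on UNIV (\<lambda>r. h (1, r))" by (rule cont_comp[OF ch]) (auto intro!: continuous_intros)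
    fix t1 :: real
    have cH: "continuous_on UNIV (\<lambda>q. h (1, t1, q))" by (rule cont_comp[OF ch]) (auto intro!: continuous_intros)
    show "integral (cbox (0,0,0,0) (1,1,1,1)) (\<lambda>r. h (1, fst (t1, r), fst (snd (t1, r)), fst (snd (snd (t1, r))),
       fst (snd (snd (snd (t1, r)))) + ((-1) * fst (snd (t1, r)) + 0 * fst (snd (snd (t1, r)))),
       snd (snd (snd (snd (t1, r)))) + (0 * fst (snd (t1, r)) + (-1) * fst (snd (snd (t1, r)))))) =
      integral (cbox (0,0,0,0) (1,1,1,1)) (\<lambda>r. h (1, t1, r))"
      using shift4[of "\<lambda>q. h (1, t1, q)" "-1" 0 0 "-1", OF cH] p5 p6 by simp
  qed
  finally show "integral (cbox (0,0,0,0,0) (1,1,1,1,1)) (\<lambda>r. h (1, r)) =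
    integral (cbox (0,0,0,0,0) (1,1,1,1,1)) (\<lambda>r. h (0, r))" by simp
qed

lemma ftc01:
  fixes f f' :: "real \<Rightarrow> complex"
  assumes "\<And>u. (f has_vector_derivative f' u) (at u)" "f 1 = f 0"
  shows "integral (cbox 0 1) f' = 0"
proof -
  have "(f' has_integral (f 1 - f 0)) {0..1}"
    by (rule fundamental_theorem_of_calculus) (auto intro: has_vector_derivative_at_within assms)
  then show ?thesis using assms(2) by (simp add: integral_unique)
qed

lemma D_t1:
  fixes h h' :: "r6 \<Rightarrow> complex"
  assumes ch: "continuous_on UNIV h" and ch': "continuous_on UNIV h'"
    and der: "\<And>s1 u r. ((\<lambda>u. h (s1, u, r)) has_vector_derivative h' (s1, u, r)) (at u)"
    and bd: "\<And>s1 s2 t2 s3 t3. h (s1, 0, s2, t2, s3, t3) = h (s1, 1, s2, t2, s3 + t2, t3 - s2)"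
    and p5: "\<And>s1 t1 s2 t2 s3 t3. h (s1, t1, s2, t2, s3 + 1, t3) = h (s1, t1, s2, t2, s3, t3)"
    and p6: "\<And>s1 t1 s2 t2 s3 t3. h (s1, t1, s2, t2, s3, t3 + 1) = h (s1, t1, s2, t2, s3, t3)"
  shows "integral (cbox (0,0,0,0,0,0) (1,1,1,1,1,1)) h' = 0"
proof (rule inner_zero[OF ch'])
  fix s1 :: real
  have c1: "continuous_on UNIV (\<lambda>q. h (s1, q))" by (rule cont_comp[OF ch]) (auto intro!: continuous_intros)
  have c2: "continuous_on UNIV (\<lambda>q. h' (s1, q))" by (rule cont_comp[OF ch']) (auto intro!: continuous_intros)
  show "integral (cbox (0,0,0,0,0) (1,1,1,1,1)) (\<lambda>r. h' (s1, r)) = 0"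
  proof (rule first_coord[of "\<lambda>q. h (s1, q)" "\<lambda>q. h' (s1, q)", OF c1 c2])
    show "((\<lambda>u. h (s1, u, r)) has_vector_derivative h' (s1, u, r)) (at u)" for u r by (rule der)
    have cH: "continuous_on UNIV (\<lambda>q. h (s1, 1, q))" by (rule cont_comp[OF ch]) (auto intro!: continuous_intros)
    have "integral (cbox (0,0,0,0) (1,1,1,1)) (\<lambda>r. h (s1, 0, r)) =
      integral (cbox (0,0,0,0) (1,1,1,1)) (\<lambda>x. h (s1, 1, fst x, fst (snd x),
      fst (snd (snd x)) + (0 * fst x + 1 * fst (snd x)), snd (snd (snd x)) + ((-1) * fst x + 0 * fst (snd x))))"
      by (rule integral_cong) (auto simp: bd split: prod.splits)
    also have "\<dots> = integral (cbox (0,0,0,0) (1,1,1,1)) (\<lambda>r. h (s1, 1, r))"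
      using shift4[of "\<lambda>q. h (s1, 1, q)" 0 1 "-1" 0, OF cH] p5 p6 by simp
    finally show "integral (cbox (0,0,0,0) (1,1,1,1)) (\<lambda>r. h (s1, 1, r)) =
        integral (cbox (0,0,0,0) (1,1,1,1)) (\<lambda>r. h (s1, 0, r))" by simp
  qed
qed

lemma D_s2:
  fixes h h' :: "r6 \<Rightarrow> complex"
  assumes ch: "continuous_on UNIV h" and ch': "continuous_on UNIV h'"
    and der: "\<And>s1 t1 u r. ((\<lambda>u. h (s1, t1, u, r)) has_vector_derivative h' (s1, t1, u, r)) (at u)"
    and bd: "\<And>s1 t1 t2 s3 t3. h (s1, t1, 0, t2, s3, t3) = h (s1, t1, 1, t2, s3, t3)"
  shows "integral (cbox (0,0,0,0,0,0) (1,1,1,1,1,1)) h' = 0"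
proof (rule inner_zero[OF ch'])
  fix s1 :: real
  show "integral (cbox (0,0,0,0,0) (1,1,1,1,1)) (\<lambda>r. h' (s1, r)) = 0"
  proof (rule inner_zero)
    show "continuous_on UNIV (\<lambda>r. h' (s1, r))" by (rule cont_comp[OF ch']) (auto intro!: continuous_intros)
    fix t1 :: real
    have c1: "continuous_on UNIV (\<lambda>q. h (s1, t1, q))" by (rule cont_comp[OF ch]) (auto intro!: continuous_intros)
    have c2: "continuous_on UNIV (\<lambda>q. h' (s1, t1, q))" by (rule cont_comp[OF ch']) (auto intro!: continuous_intros)
    show "integral (cbox (0,0,0,0) (1,1,1,1)) (\<lambda>r. h' (s1, t1, r)) = 0"
      by (rule first_coord[of "\<lambda>q. h (s1, t1, q)" "\<lambda>q. h' (s1, t1, q)", OF c1 c2 der])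
         (rule integral_cong, auto simp: bd split: prod.splits)
  qed
qed

lemma D_t2:
  fixes h h' :: "r6 \<Rightarrow> complex"
  assumes ch: "continuous_on UNIV h" and ch': "continuous_on UNIV h'"
    and der: "\<And>s1 t1 s2 u r. ((\<lambda>u. h (s1, t1, s2, u, r)) has_vector_derivative h' (s1, t1, s2, u, r)) (at u)"
    and bd: "\<And>s1 t1 s2 s3 t3. h (s1, t1, s2, 0, s3, t3) = h (s1, t1, s2, 1, s3, t3)"
  shows "integral (cbox (0,0,0,0,0,0) (1,1,1,1,1,1)) h' = 0"
proof (rule inner_zero[OF ch'])
  fix s1 :: real
  show "integral (cbox (0,0,0,0,0) (1,1,1,1,1)) (\<lambda>r. h' (s1, r)) = 0"
  proof (rule inner_zero)
    show "continuous_on UNIV (\<lambda>r. h' (s1, r))" by (rule cont_comp[OF ch']) (auto intro!: continuous_intros)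
    fix t1 :: real
    show "integral (cbox (0,0,0,0) (1,1,1,1)) (\<lambda>r. h' (s1, t1, r)) = 0"
    proof (rule inner_zero)
      show "continuous_on UNIV (\<lambda>r. h' (s1, t1, r))" by (rule cont_comp[OF ch']) (auto intro!: continuous_intros)
      fix s2 :: real
      have c1: "continuous_on UNIV (\<lambda>q. h (s1, t1, s2, q))" by (rule cont_comp[OF ch]) (auto intro!: continuous_intros)
      have c2: "continuous_on UNIV (\<lambda>q. h' (s1, t1, s2, q))" by (rule cont_comp[OF ch']) (auto intro!: continuous_intros)
      show "integral (cbox (0,0,0) (1,1,1)) (\<lambda>r. h' (s1, t1, s2, r)) = 0"
        by (rule first_coord[of "\<lambda>q. h (s1, t1, s2, q)" "\<lambda>q. h' (s1, t1, s2, q)", OF c1 c2 der])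
           (rule integral_cong, auto simp: bd split: prod.splits)
    qed
  qed
qed

lemma D_s3:
  fixes h h' :: "r6 \<Rightarrow> complex"
  assumes ch: "continuous_on UNIV h" and ch': "continuous_on UNIV h'"
    and der: "\<And>s1 t1 s2 t2 u r. ((\<lambda>u. h (s1, t1, s2, t2, u, r)) has_vector_derivative h' (s1, t1, s2, t2, u, r)) (at u)"
    and bd: "\<And>s1 t1 s2 t2 t3. h (s1, t1, s2, t2, 0, t3) = h (s1, t1, s2, t2, 1, t3)"
  shows "integral (cbox (0,0,0,0,0,0) (1,1,1,1,1,1)) h' = 0"
proof (rule inner_zero[OF ch'])
  fix s1 :: real
  show "integral (cbox (0,0,0,0,0) (1,1,1,1,1)) (\<lambda>r. h' (s1, r)) = 0"
  proof (rule inner_zero)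
    show "continuous_on UNIV (\<lambda>r. h' (s1, r))" by (rule cont_comp[OF ch']) (auto intro!: continuous_intros)
    fix t1 :: real
    show "integral (cbox (0,0,0,0) (1,1,1,1)) (\<lambda>r. h' (s1, t1, r)) = 0"
    proof (rule inner_zero)
      show "continuous_on UNIV (\<lambda>r. h' (s1, t1, r))" by (rule cont_comp[OF ch']) (auto intro!: continuous_intros)
      fix s2 :: real
      show "integral (cbox (0,0,0) (1,1,1)) (\<lambda>r. h' (s1, t1, s2, r)) = 0"
      proof (rule inner_zero)
        show "continuous_on UNIV (\<lambda>r. h' (s1, t1, s2, r))" by (rule cont_comp[OF ch']) (auto intro!: continuous_intros)
        fix t2 :: real
        have c1: "continuous_on UNIV (\<lambda>q. h (s1, t1, s2, t2, q))" by (rule cont_comp[OF ch]) (auto intro!: continuous_intros)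
        have c2: "continuous_on UNIV (\<lambda>q. h' (s1, t1, s2, t2, q))" by (rule cont_comp[OF ch']) (auto intro!: continuous_intros)
        show "integral (cbox (0,0) (1,1)) (\<lambda>r. h' (s1, t1, s2, t2, r)) = 0"
          by (rule first_coord[of "\<lambda>q. h (s1, t1, s2, t2, q)" "\<lambda>q. h' (s1, t1, s2, t2, q)", OF c1 c2 der])
             (rule integral_cong, auto simp: bd)
      qed
    qed
  qed
qed

lemma D_t3:
  fixes h h' :: "r6 \<Rightarrow> complex"
  assumes ch: "continuous_on UNIV h" and ch': "continuous_on UNIV h'"
    and der: "\<And>s1 t1 s2 t2 s3 u. ((\<lambda>u. h (s1, t1, s2, t2, s3, u)) has_vector_derivative h' (s1, t1, s2, t2, s3, u)) (at u)"
    and bd: "\<And>s1 t1 s2 t2 s3. h (s1, t1, s2, t2, s3, 0) = h (s1, t1, s2, t2, s3, 1)"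
  shows "integral (cbox (0,0,0,0,0,0) (1,1,1,1,1,1)) h' = 0"
proof (rule inner_zero[OF ch'])
  fix s1 :: real
  show "integral (cbox (0,0,0,0,0) (1,1,1,1,1)) (\<lambda>r. h' (s1, r)) = 0"
  proof (rule inner_zero)
    show "continuous_on UNIV (\<lambda>r. h' (s1, r))" by (rule cont_comp[OF ch']) (auto intro!: continuous_intros)
    fix t1 :: real
    show "integral (cbox (0,0,0,0) (1,1,1,1)) (\<lambda>r. h' (s1, t1, r)) = 0"
    proof (rule inner_zero)
      show "continuous_on UNIV (\<lambda>r. h' (s1, t1, r))" by (rule cont_comp[OF ch']) (auto intro!: continuous_intros)
      fix s2 :: real
      show "integral (cbox (0,0,0) (1,1,1)) (\<lambda>r. h' (s1, t1, s2, r)) = 0"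
      proof (rule inner_zero)
        show "continuous_on UNIV (\<lambda>r. h' (s1, t1, s2, r))" by (rule cont_comp[OF ch']) (auto intro!: continuous_intros)
        fix t2 :: real
        show "integral (cbox (0,0) (1,1)) (\<lambda>r. h' (s1, t1, s2, t2, r)) = 0"
        proof (rule inner_zero)
          show "continuous_on UNIV (\<lambda>r. h' (s1, t1, s2, t2, r))" by (rule cont_comp[OF ch']) (auto intro!: continuous_intros)
          fix s3 :: real
          show "integral (cbox 0 1) (\<lambda>r. h' (s1, t1, s2, t2, s3, r)) = 0"
            by (rule ftc01[of "\<lambda>u. h (s1, t1, s2, t2, s3, u)"]) (use der bd in auto)
        qed
      qed
    qed
  qed
qed

lemma line_deriv:
  fixes F :: "'a::real_normed_vector \<Rightarrow> complex"
  assumes "F differentiable (at (P + u *\<^sub>R v))"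
  shows "((\<lambda>u. F (P + u *\<^sub>R v)) has_vector_derivative frechet_derivative F (at (P + u *\<^sub>R v)) v) (at u)"
proof -
  have d1: "((\<lambda>u. P + u *\<^sub>R v) has_derivative (\<lambda>h. h *\<^sub>R v)) (at u)"
    by (auto intro!: derivative_eq_intros)
  have "((F \<circ> (\<lambda>u. P + u *\<^sub>R v)) has_derivative (frechet_derivative F (at (P + u *\<^sub>R v)) \<circ> (\<lambda>h. h *\<^sub>R v))) (at u)"
    by (rule diff_chain_at[OF d1]) (use assms fdw in auto)
  moreover have "frechet_derivative F (at (P + u *\<^sub>R v)) \<circ> (\<lambda>h. h *\<^sub>R v) = (\<lambda>h. h *\<^sub>R frechet_derivative F (at (P + u *\<^sub>R v)) v)"
    using fd_linear[OF assms] by (auto simp: linear_scale)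
  ultimately show ?thesis unfolding has_vector_derivative_def by (simp add: o_def)
qed

context BRG begin

definition emb :: "complex \<Rightarrow> complex \<Rightarrow> complex \<Rightarrow> complex^'N" where
  "emb x y w = axis i1 x + axis i2 y + axis i3 w"

definition emb6 :: "r6 \<Rightarrow> complex^'N" where
  "emb6 p = emb (Complex (fst p) (fst (snd p))) (Complex (fst (snd (snd p))) (fst (snd (snd (snd p)))))
      (Complex (fst (snd (snd (snd (snd p))))) (snd (snd (snd (snd (snd p))))))"

lemma emb6_simp: "emb6 (s1, t1, s2, t2, s3, t3) = emb (Complex s1 t1) (Complex s2 t2) (Complex s3 t3)"
  by (simp add: emb6_def)

lemma cont_emb6: "continuous_on UNIV emb6"
proof -
  have e: "emb6 = (\<lambda>p. \<chi> j. (if j = i1 then 1 else 0) * Complex (fst p) (fst (snd p))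
     + (if j = i2 then 1 else 0) * Complex (fst (snd (snd p))) (fst (snd (snd (snd p))))
     + (if j = i3 then 1 else 0) * Complex (fst (snd (snd (snd (snd p))))) (snd (snd (snd (snd (snd p))))))"
    by (auto simp: emb6_def emb_def axis_def vec_eq_iff fun_eq_iff)
  show ?thesis unfolding e
    by (intro continuous_on_vec_lambda) (simp only: Complex_eq; intro continuous_intros)
qed

lemma emb_shift1: "emb6 (u, r) = emb6 (0, r) + u *\<^sub>R axis i1 1"
  by (cases r) (auto simp: emb6_simp emb_def vec_eq_iff axis_def complex_eq_iff)
lemma emb_shift2: "emb6 (s1, u, r) = emb6 (s1, 0, r) + u *\<^sub>R axis i1 \<i>"
  by (cases r) (auto simp: emb6_simp emb_def vec_eq_iff axis_def complex_eq_iff)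
lemma emb_shift3: "emb6 (s1, t1, u, r) = emb6 (s1, t1, 0, r) + u *\<^sub>R axis i2 1"
  using i_distinct by (cases r) (auto simp: emb6_simp emb_def vec_eq_iff axis_def complex_eq_iff)
lemma emb_shift4: "emb6 (s1, t1, s2, u, r) = emb6 (s1, t1, s2, 0, r) + u *\<^sub>R axis i2 \<i>"
  using i_distinct by (cases r) (auto simp: emb6_simp emb_def vec_eq_iff axis_def complex_eq_iff)
lemma emb_shift5: "emb6 (s1, t1, s2, t2, u, r) = emb6 (s1, t1, s2, t2, 0, r) + u *\<^sub>R axis i3 1"
  using i_distinct by (auto simp: emb6_simp emb_def vec_eq_iff axis_def complex_eq_iff)
lemma emb_shift6: "emb6 (s1, t1, s2, t2, s3, u) = emb6 (s1, t1, s2, t2, s3, 0) + u *\<^sub>R axis i3 \<i>"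
  using i_distinct by (auto simp: emb6_simp emb_def vec_eq_iff axis_def complex_eq_iff)

lemma Lg_emb: "Lg a b cc (emb x y w) = emb (x + a) (y + b) (w + cc - a * y)"
  using i_distinct by (auto simp: Lg_def emb_def vec_eq_iff axis_def)

lemma Lg6_1: "Lg 1 0 0 (emb6 (0, t1, s2, t2, s3, t3)) = emb6 (1, t1, s2, t2, s3 - s2, t3 - t2)"
  unfolding emb6_simp Lg_emb by (rule arg_cong3[where f=emb]) (simp_all add: complex_eq_iff)
lemma Lg6_2: "Lg \<i> 0 0 (emb6 (s1, 0, s2, t2, s3, t3)) = emb6 (s1, 1, s2, t2, s3 + t2, t3 - s2)"
  unfolding emb6_simp Lg_emb by (rule arg_cong3[where f=emb]) (simp_all add: complex_eq_iff)
lemma Lg6_3: "Lg 0 1 0 (emb6 (s1, t1, 0, t2, s3, t3)) = emb6 (s1, t1, 1, t2, s3, t3)"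
  unfolding emb6_simp Lg_emb by (rule arg_cong3[where f=emb]) (simp_all add: complex_eq_iff)
lemma Lg6_4: "Lg 0 \<i> 0 (emb6 (s1, t1, s2, 0, s3, t3)) = emb6 (s1, t1, s2, 1, s3, t3)"
  unfolding emb6_simp Lg_emb by (rule arg_cong3[where f=emb]) (simp_all add: complex_eq_iff)
lemma Lg6_5: "Lg 0 0 1 (emb6 (s1, t1, s2, t2, s3, t3)) = emb6 (s1, t1, s2, t2, s3 + 1, t3)"
  unfolding emb6_simp Lg_emb by (rule arg_cong3[where f=emb]) (simp_all add: complex_eq_iff)
lemma Lg6_6: "Lg 0 0 \<i> (emb6 (s1, t1, s2, t2, s3, t3)) = emb6 (s1, t1, s2, t2, s3, t3 + 1)"
  unfolding emb6_simp Lg_emb by (rule arg_cong3[where f=emb]) (simp_all add: complex_eq_iff)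

lemma cont_h: "C1 F \<Longrightarrow> continuous_on UNIV (\<lambda>p. F (emb6 p))"
  by (rule cont_comp[OF C1_cont cont_emb6])
lemma cont_h': "C1 F \<Longrightarrow> continuous_on UNIV (\<lambda>p. frechet_derivative F (at (emb6 p)) v)"
  by (rule cont_comp[OF C1_contD cont_emb6])

abbreviation "B6 \<equiv> cbox (0::real,0::real,0::real,0::real,0::real,0::real) (1,1,1,1,1,1)"

lemma int_s1:
  assumes F: "C1 F" and i1: "\<And>X. F X = F (Lg 1 0 0 X)" and i5: "\<And>X. F X = F (Lg 0 0 1 X)" and i6: "\<And>X. F X = F (Lg 0 0 \<i> X)"
  shows "integral B6 (\<lambda>p. frechet_derivative F (at (emb6 p)) (axis i1 1)) = 0"
proof (rule D_s1[OF cont_h[OF F] cont_h'[OF F]])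
  show "((\<lambda>u. F (emb6 (u, r))) has_vector_derivative frechet_derivative F (at (emb6 (u, r))) (axis i1 1)) (at u)" for u r
    using line_deriv[OF C1_diffD[OF F], where P="emb6 (0, r)" and u=u and v="axis i1 1"] by (simp only: emb_shift1[symmetric])
  show "F (emb6 (0, t1, s2, t2, s3, t3)) = F (emb6 (1, t1, s2, t2, s3 - s2, t3 - t2))" for t1 s2 t2 s3 t3
    using i1[of "emb6 (0, t1, s2, t2, s3, t3)"] unfolding Lg6_1 .
  show "F (emb6 (s1, t1, s2, t2, s3 + 1, t3)) = F (emb6 (s1, t1, s2, t2, s3, t3))" for s1 t1 s2 t2 s3 t3
    using i5[of "emb6 (s1, t1, s2, t2, s3, t3)"] unfolding Lg6_5 by simp
  show "F (emb6 (s1, t1, s2, t2, s3, t3 + 1)) = F (emb6 (s1, t1, s2, t2, s3, t3))" for s1 t1 s2 t2 s3 t3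
    using i6[of "emb6 (s1, t1, s2, t2, s3, t3)"] unfolding Lg6_6 by simp
qed

lemma int_t1:
  assumes F: "C1 F" and i1: "\<And>X. F X = F (Lg \<i> 0 0 X)" and i5: "\<And>X. F X = F (Lg 0 0 1 X)" and i6: "\<And>X. F X = F (Lg 0 0 \<i> X)"
  shows "integral B6 (\<lambda>p. frechet_derivative F (at (emb6 p)) (axis i1 \<i>)) = 0"
proof (rule D_t1[OF cont_h[OF F] cont_h'[OF F]])
  show "((\<lambda>u. F (emb6 (s1, u, r))) has_vector_derivative frechet_derivative F (at (emb6 (s1, u, r))) (axis i1 \<i>)) (at u)" for s1 u r
    using line_deriv[OF C1_diffD[OF F], where P="emb6 (s1, 0, r)" and u=u and v="axis i1 \<i>"] by (simp only: emb_shift2[symmetric])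
  show "F (emb6 (s1, 0, s2, t2, s3, t3)) = F (emb6 (s1, 1, s2, t2, s3 + t2, t3 - s2))" for s1 s2 t2 s3 t3
    using i1[of "emb6 (s1, 0, s2, t2, s3, t3)"] unfolding Lg6_2 .
  show "F (emb6 (s1, t1, s2, t2, s3 + 1, t3)) = F (emb6 (s1, t1, s2, t2, s3, t3))" for s1 t1 s2 t2 s3 t3
    using i5[of "emb6 (s1, t1, s2, t2, s3, t3)"] unfolding Lg6_5 by simp
  show "F (emb6 (s1, t1, s2, t2, s3, t3 + 1)) = F (emb6 (s1, t1, s2, t2, s3, t3))" for s1 t1 s2 t2 s3 t3
    using i6[of "emb6 (s1, t1, s2, t2, s3, t3)"] unfolding Lg6_6 by simp
qed

lemma int_s2:
  assumes F: "C1 F" and i1: "\<And>X. F X = F (Lg 0 1 0 X)"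
  shows "integral B6 (\<lambda>p. frechet_derivative F (at (emb6 p)) (axis i2 1)) = 0"
proof (rule D_s2[OF cont_h[OF F] cont_h'[OF F]])
  show "((\<lambda>u. F (emb6 (s1, t1, u, r))) has_vector_derivative frechet_derivative F (at (emb6 (s1, t1, u, r))) (axis i2 1)) (at u)" for s1 t1 u r
    using line_deriv[OF C1_diffD[OF F], where P="emb6 (s1, t1, 0, r)" and u=u and v="axis i2 1"] by (simp only: emb_shift3[symmetric])
  show "F (emb6 (s1, t1, 0, t2, s3, t3)) = F (emb6 (s1, t1, 1, t2, s3, t3))" for s1 t1 t2 s3 t3
    using i1[of "emb6 (s1, t1, 0, t2, s3, t3)"] unfolding Lg6_3 .
qed

lemma int_t2:
  assumes F: "C1 F" and i1: "\<And>X. F X = F (Lg 0 \<i> 0 X)"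
  shows "integral B6 (\<lambda>p. frechet_derivative F (at (emb6 p)) (axis i2 \<i>)) = 0"
proof (rule D_t2[OF cont_h[OF F] cont_h'[OF F]])
  show "((\<lambda>u. F (emb6 (s1, t1, s2, u, r))) has_vector_derivative frechet_derivative F (at (emb6 (s1, t1, s2, u, r))) (axis i2 \<i>)) (at u)" for s1 t1 s2 u r
    using line_deriv[OF C1_diffD[OF F], where P="emb6 (s1, t1, s2, 0, r)" and u=u and v="axis i2 \<i>"] by (simp only: emb_shift4[symmetric])
  show "F (emb6 (s1, t1, s2, 0, s3, t3)) = F (emb6 (s1, t1, s2, 1, s3, t3))" for s1 t1 s2 s3 t3
    using i1[of "emb6 (s1, t1, s2, 0, s3, t3)"] unfolding Lg6_4 .
qed

lemma int_s3:
  assumes F: "C1 F" and i1: "\<And>X. F X = F (Lg 0 0 1 X)"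
  shows "integral B6 (\<lambda>p. frechet_derivative F (at (emb6 p)) (axis i3 1)) = 0"
proof (rule D_s3[OF cont_h[OF F] cont_h'[OF F]])
  show "((\<lambda>u. F (emb6 (s1, t1, s2, t2, u, r))) has_vector_derivative frechet_derivative F (at (emb6 (s1, t1, s2, t2, u, r))) (axis i3 1)) (at u)" for s1 t1 s2 t2 u r
    using line_deriv[OF C1_diffD[OF F], where P="emb6 (s1, t1, s2, t2, 0, r)" and u=u and v="axis i3 1"] by (simp only: emb_shift5[symmetric])
  show "F (emb6 (s1, t1, s2, t2, 0, t3)) = F (emb6 (s1, t1, s2, t2, 1, t3))" for s1 t1 s2 t2 t3
    using i1[of "emb6 (s1, t1, s2, t2, 0, t3)"] unfolding Lg6_5 by simp
qed

lemma int_t3: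
  assumes F: "C1 F" and i1: "\<And>X. F X = F (Lg 0 0 \<i> X)"
  shows "integral B6 (\<lambda>p. frechet_derivative F (at (emb6 p)) (axis i3 \<i>)) = 0"
proof (rule D_t3[OF cont_h[OF F] cont_h'[OF F]])
  show "((\<lambda>u. F (emb6 (s1, t1, s2, t2, s3, u))) has_vector_derivative frechet_derivative F (at (emb6 (s1, t1, s2, t2, s3, u))) (axis i3 \<i>)) (at u)" for s1 t1 s2 t2 s3 u
    using line_deriv[OF C1_diffD[OF F], where P="emb6 (s1, t1, s2, t2, s3, 0)" and u=u and v="axis i3 \<i>"] by (simp only: emb_shift6[symmetric])
  show "F (emb6 (s1, t1, s2, t2, s3, 0)) = F (emb6 (s1, t1, s2, t2, s3, 1))" for s1 t1 s2 t2 s3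
    using i1[of "emb6 (s1, t1, s2, t2, s3, 0)"] unfolding Lg6_6 by simp
qed

lemma g33_pos: "0 < Re (g k3 k3 X)"
proof -
  let ?\<xi> = "\<lambda>c. if c = k3 then (1::complex) else 0"
  have ex: "\<exists>c<BR_N n. ?\<xi> c \<noteq> 0" using idx_lt by auto
  have H: "\<forall>x \<xi>. (\<exists>c<BR_N n. \<xi> c \<noteq> 0) \<longrightarrow> 0 < Re (\<Sum>c<BR_N n. \<Sum>d<BR_N n. g c d x * \<xi> c * cnj (\<xi> d))"
    using herm unfolding BR_hermitian_metric_def by blast
  have pos: "0 < Re (\<Sum>c<BR_N n. \<Sum>d<BR_N n. g c d X * ?\<xi> c * cnj (?\<xi> d))"
    using H[rule_format, of ?\<xi> X, OF ex] .
  have t: "\<And>c d. g c d X * ?\<xi> c * cnj (?\<xi> d) = (if c = k3 then (if d = k3 then g c d X else 0) else 0)"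
    by simp
  have "(\<Sum>c<BR_N n. \<Sum>d<BR_N n. g c d X * ?\<xi> c * cnj (?\<xi> d)) =
     (\<Sum>c<BR_N n. if c = k3 then (\<Sum>d<BR_N n. if d = k3 then g c d X else 0) else 0)"
    unfolding t by (intro sum.cong refl) auto
  also have "\<dots> = (\<Sum>c<BR_N n. if c = k3 then g c k3 X else 0)"
    using idx_lt by (intro sum.cong refl) (simp add: sum.delta)
  also have "\<dots> = g k3 k3 X" using idx_lt by (simp add: sum.delta)
  finally have "(\<Sum>c<BR_N n. \<Sum>d<BR_N n. g c d X * ?\<xi> c * cnj (?\<xi> d)) = g k3 k3 X" .
  then
  show ?thesis using pos by simp
qed

lemma intg:
  assumes F: "C1 F"
  shows "(\<lambda>p. frechet_derivative F (at (emb6 p)) v) integrable_on B6"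
proof -
  have "continuous_on B6 (\<lambda>p. frechet_derivative F (at (emb6 p)) v)"
    using continuous_on_subset[OF cont_h'[OF F] subset_UNIV] .
  then show ?thesis by (rule integrable_continuous)
qed

lemma int_div2: "integral S (\<lambda>x. f x / (2::complex)) = integral S f / 2"
proof -
  have "integral S (\<lambda>x. f x * inverse 2) = integral S f * inverse 2" by (rule integral_mult_left)
  then show ?thesis by (simp only: divide_inverse)
qed

lemma int_wirt:
  assumes F: "C1 F" and k: "\<iota> k = j" and z1: "integral B6 (\<lambda>p. frechet_derivative F (at (emb6 p)) (axis j 1)) = 0"
    and z2: "integral B6 (\<lambda>p. frechet_derivative F (at (emb6 p)) (axis j \<i>)) = 0"
  shows "integral B6 (\<lambda>p. wirt \<iota> k F (emb6 p)) = 0"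
    and "integral B6 (\<lambda>p. wirtbar \<iota> k F (emb6 p)) = 0"
proof -
  let ?A = "\<lambda>p. frechet_derivative F (at (emb6 p)) (axis j 1)"
  let ?B = "\<lambda>p. frechet_derivative F (at (emb6 p)) (axis j \<i>)"
  have cA: "continuous_on B6 ?A" and cB: "continuous_on B6 ?B"
    using continuous_on_subset[OF cont_h'[OF F] subset_UNIV] by blast+
  have iA: "?A integrable_on B6" by (rule integrable_continuous[OF cA])
  have iB: "(\<lambda>p. \<i> * ?B p) integrable_on B6" by (rule integrable_continuous) (intro continuous_intros cB)
  have "integral B6 (\<lambda>p. wirt \<iota> k F (emb6 p)) = integral B6 (\<lambda>p. (?A p - \<i> * ?B p) / 2)"
    by (simp add: wirt_eq k)
  also have "\<dots> = (integral B6 ?A - \<i> * integral B6 ?B) / 2"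
    unfolding int_div2 integral_diff[OF iA iB] integral_mult_right ..
  finally show "integral B6 (\<lambda>p. wirt \<iota> k F (emb6 p)) = 0" using z1 z2 by simp
  have "integral B6 (\<lambda>p. wirtbar \<iota> k F (emb6 p)) = integral B6 (\<lambda>p. (?A p + \<i> * ?B p) / 2)"
    by (simp add: wirtbar_eq k)
  also have "\<dots> = (integral B6 ?A + \<i> * integral B6 ?B) / 2"
    unfolding int_div2 integral_add[OF iA iB] integral_mult_right ..
  finally show "integral B6 (\<lambda>p. wirtbar \<iota> k F (emb6 p)) = 0" using z1 z2 by simp
qed

lemma wirt_cont:
  assumes "C1 F"
  shows "(\<lambda>p. wirt \<iota> k F (emb6 p)) integrable_on B6" and "(\<lambda>p. wirtbar \<iota> k F (emb6 p)) integrable_on B6"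
proof -
  have c: "continuous_on B6 (\<lambda>p. frechet_derivative F (at (emb6 p)) v)" for v
    by (rule continuous_on_subset[OF cont_h'[OF assms] subset_UNIV])
  show "(\<lambda>p. wirt \<iota> k F (emb6 p)) integrable_on B6"
    unfolding wirt_eq by (rule integrable_continuous) (intro continuous_intros c; simp)
  show "(\<lambda>p. wirtbar \<iota> k F (emb6 p)) integrable_on B6"
    unfolding wirtbar_eq by (rule integrable_continuous) (intro continuous_intros c; simp)
qed

lemma iotas2: "\<iota> n = i2" "\<iota> k3 = i3" by (simp_all add: i2_def i3_def)

theorem no_skt: False
proof -
  have G: "(1::complex) \<in> gauss_ints" "\<i> \<in> gauss_ints" "(0::complex) \<in> gauss_ints" by (simp_all add: gi_0 gi_1 gi_i)
  note C = C1_fluxes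
  have I1: "integral B6 (\<lambda>p. wirt \<iota> 0 fA (emb6 p)) = 0"
    by (rule int_wirt(1)[OF C(1) iotas(1) int_s1[OF C(1)] int_t1[OF C(1)]]) (simp_all add: fA_inv G)
  have I2: "integral B6 (\<lambda>p. wirtbar \<iota> 0 fB (emb6 p)) = 0"
    by (rule int_wirt(2)[OF C(2) iotas(1) int_s1[OF C(2)] int_t1[OF C(2)]]) (simp_all add: fB_inv G)
  have I3: "integral B6 (\<lambda>p. wirt \<iota> n fC2 (emb6 p)) = 0"
    by (rule int_wirt(1)[OF C(3) iotas2(1) int_s2[OF C(3)] int_t2[OF C(3)]]) (simp_all add: fC2_inv G)
  have I4: "integral B6 (\<lambda>p. wirt \<iota> k3 fC3 (emb6 p)) = 0"
    by (rule int_wirt(1)[OF C(4) iotas2(2) int_s3[OF C(4)] int_t3[OF C(4)]]) (simp_all add: fC3_inv G)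
  have I5: "integral B6 (\<lambda>p. wirtbar \<iota> n fD2 (emb6 p)) = 0"
    by (rule int_wirt(2)[OF C(5) iotas2(1) int_s2[OF C(5)] int_t2[OF C(5)]]) (simp_all add: fD2_inv G)
  have I6: "integral B6 (\<lambda>p. wirtbar \<iota> k3 fD3 (emb6 p)) = 0"
    by (rule int_wirt(2)[OF C(6) iotas2(2) int_s3[OF C(6)] int_t3[OF C(6)]]) (simp_all add: fD3_inv G)
  define S where "S = (\<lambda>p. wirt \<iota> 0 fA (emb6 p) + wirtbar \<iota> 0 fB (emb6 p) + wirt \<iota> n fC2 (emb6 p)
     + wirt \<iota> k3 fC3 (emb6 p) + wirtbar \<iota> n fD2 (emb6 p) + wirtbar \<iota> k3 fD3 (emb6 p))"
  have W: "(\<lambda>p. wirt \<iota> 0 fA (emb6 p)) integrable_on B6" "(\<lambda>p. wirtbar \<iota> 0 fB (emb6 p)) integrable_on B6"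
    "(\<lambda>p. wirt \<iota> n fC2 (emb6 p)) integrable_on B6" "(\<lambda>p. wirt \<iota> k3 fC3 (emb6 p)) integrable_on B6"
    "(\<lambda>p. wirtbar \<iota> n fD2 (emb6 p)) integrable_on B6" "(\<lambda>p. wirtbar \<iota> k3 fD3 (emb6 p)) integrable_on B6"
    using wirt_cont C by blast+
  have intS: "integral B6 S = 0"
    unfolding S_def
    by (simp only: integral_add integrable_add W I1 I2 I3 I4 I5 I6 add_0_left)
  have eq: "g k3 k3 (emb6 p) = - S p" for p
    using flux_sum_zero[of "emb6 p"] unfolding S_def by (simp add: algebra_simps eq_neg_iff_add_eq_0)
  have int0: "integral B6 (\<lambda>p. g k3 k3 (emb6 p)) = 0"
    unfolding eq integral_neg intS by simp
  have cg: "continuous_on UNIV (\<lambda>p. g k3 k3 (emb6 p))"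
    by (rule cont_h) (use C1_g idx_lt in blast)
  have cR: "continuous_on B6 (\<lambda>p. Re (g k3 k3 (emb6 p)))"
    by (intro continuous_intros continuous_on_subset[OF cg subset_UNIV])
  have ne: "B6 \<noteq> {}" by (simp add: cbox_Pair_eq)
  obtain p0 where p0: "p0 \<in> B6" "\<And>p. p \<in> B6 \<Longrightarrow> Re (g k3 k3 (emb6 p0)) \<le> Re (g k3 k3 (emb6 p))"
    using continuous_attains_inf[OF compact_cbox ne cR] by blast
  let ?m = "Re (g k3 k3 (emb6 p0))"
  have m: "0 < ?m" by (rule g33_pos)
  have intR: "(\<lambda>p. Re (g k3 k3 (emb6 p))) integrable_on B6" by (rule integrable_continuous[OF cR])
  have "integral B6 (\<lambda>p. ?m) \<le> integral B6 (\<lambda>p. Re (g k3 k3 (emb6 p)))"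
    by (rule integral_le) (use p0 intR in auto)
  moreover have "integral B6 (\<lambda>p. ?m) = ?m"
    by (simp add: content_Pair)
  moreover have "integral B6 (\<lambda>p. Re (g k3 k3 (emb6 p))) = Re (integral B6 (\<lambda>p. g k3 k3 (emb6 p)))"
    using integral_linear[OF integrable_continuous[OF continuous_on_subset[OF cg subset_UNIV]] bounded_linear_Re]
    by (simp add: o_def)
  ultimately show False using int0 m by simp
qed

end

theorem proposition3p5:
  fixes n :: nat and \<iota> :: "nat \<Rightarrow> 'N::finite"
  assumes "2 \<le> n" and "bij_betw \<iota> {..<BR_N n} (UNIV :: 'N set)"
  shows "\<not> (\<exists>g. BR_SKT_metric n \<iota> g)"
proof
  assume "\<exists>g. BR_SKT_metric n \<iota> g"
  then obtain g where g: "BR_SKT_metric n \<iota> g" by blast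
  interpret BRG n \<iota> g
    using assms g by unfold_locales
  show False by (rule no_skt)
qed

end
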